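(* For all $\theta,\hat\theta\in\Theta$, $k\in\mathbb N_+$, $\mu\in\mathcal M$, $T\ge2$, and the observation sequence $\{s_t,a_t\}_{t\in\mathbb Z}$ of any $\omega\in\Omega$: (1) for all $t\in[1:T]$, $$\|\gamma^\theta_{\mu,t|T}-\gamma^{\hat\theta}_{k,t}\|_{TV}\le\Big(1-\frac{\epsilon_b^2\zeta}{|\mathcal O|}\Big)^{t-1}+\Big(1-\frac{\epsilon_b^2\zeta}{|\mathcal O|}\Big)^{T-t}+\frac{2|\mathcal O|z_{\theta,\hat\theta}L_{\theta,\|\hat\theta-\theta\|_2}}{\epsilon_b^2\zeta}\|\hat\theta-\theta\|_2;$$ (2) for all $t\in[2:T]$, $$\|\tilde\gamma^\theta_{\mu,t|T}-\tilde\gamma^{\hat\theta}_{k,t}\|_{TV}\le2\Big(1-\frac{\epsilon_b^2\zeta}{|\mathcal O|}\Big)^{t-2}+\Big(1-\frac{\epsilon_b^2\zeta}{|\mathcal O|}\Big)^{T-t}+\frac{4|\mathcal O|z_{\theta,\hat\theta}L_{\theta,\|\hat\theta-\theta\|_2}}{\epsilon_b^2\zeta}\|\hat\theta-\theta\|_2.$$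
   Context: $\mathcal S,\mathcal A,\mathcal O$ are finite sets; $\Theta=\Theta_{hi}\times\Theta_{lo}\times\Theta_b$ is a convex compact subset of a Euclidean space. There are policies $\pi_{hi}(o\mid s;\theta_{hi})$ (distribution on $\mathcal O$), $\pi_{lo}(a\mid s,o;\theta_{lo})$ (distribution on $\mathcal A$), $\pi_b(b\mid s,o';\theta_b)$ (distribution on $\{0,1\}$), and environment kernel $P(s'\mid s,a)$. For fixed $\zeta\in(0,1)$, $\bar\pi_{hi}(o_t\mid s_t,o_{t-1},b_t;\theta_{hi})$ equals $\pi_{hi}(o_t\mid s_t;\theta_{hi})$ if $b_t=1$, $1-\zeta+\zeta/|\mathcal O|$ if $b_t=0,o_t=o_{t-1}$, $\zeta/|\mathcal O|$ if $b_t=0,o_t\ne o_{t-1}$. The options-with-failure process with parameter $\theta$: given $O_{t-1},S_t$, draw $B_t\sim\pi_b(\cdot\mid S_t,O_{t-1};\theta_b)$, $O_t\sim\bar\pi_{hi}(\cdot\mid S_t,O_{t-1},B_t;\theta_{hi})$, $A_t\sim\pi_{lo}(\cdot\mid S_t,O_t;\theta_{lo})$, $S_{t+1}\sim P(\cdot\mid S_t,A_t)$; $\mathbb P_{\theta,o_0,s_1}$ is the law of $(S_{2:T},A_{1:T},O_{1:T},B_{1:T})$ given $(O_0,S_1)=(o_0,s_1)$. Standing assumptions: (i) on an open $\tilde\Theta\supseteq\Theta$ the policies are defined, strictly positive and continuously differentiable in $\theta$; (ii) for a true parameter $\theta^*$, $\{(O_{t-1},S_t)\}_{t\ge1}$ is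 a Markov chain and $\nu^*$ is an extreme point of its set of stationary distributions. $\mathcal X=\mathcal S\times\mathcal A\times\mathcal O\times\{0,1\}$, $\Omega=\{\omega\in\mathcal X^{\mathbb Z}:P(\omega(s_{t+1})\mid\omega(s_t),\omega(a_t))>0\ \forall t\}$, $s_t=\omega(s_t),a_t=\omega(a_t)$. $\mathcal M$ = set of conditional pmfs $\mu(\cdot\mid s_1)$ on $\mathcal O$. Smoothing distributions (pmfs on $\mathcal O\times\{0,1\}$): $\gamma^\theta_{\mu,t|T}(o_t,b_t)\propto\mathbb E_{O_0\sim\mu(\cdot\mid s_1)}[\mathbb P_{\theta,O_0,s_1}(S_{2:T}=s_{2:T},A_{1:T}=a_{1:T},O_t=o_t,B_t=b_t)]$, $\tilde\gamma^\theta_{\mu,t|T}(o_{t-1},b_t)\propto\mathbb E_{O_0\sim\mu(\cdot\mid s_1)}[\mathbb P_{\theta,O_0,s_1}(S_{2:T}=s_{2:T},A_{1:T}=a_{1:T},O_{t-1}=o_{t-1},B_t=b_t)]$. For $k\in\mathbb N_+$, $\mathbb P_{\theta,k}$ is the law of the process with parameter $\theta$ over times $1-k,\dots,T+k$ with $(O_{-k},S_{1-k})\sim\nu^*$, and $\gamma^\theta_{k,t}(o_t,b_t)\propto\mathbb P_{\theta,k}(S_{1-k:T+k}=s_{1-k:T+k},A_{1-k:T+k}=a_{1-k:T+k},O_t=o_t,B_t=b_t)$, $\tilde\gamma^\theta_{k,t}(o_{t-1},b_t)\propto\mathbb P_{\theta,k}(S_{1-k:T+k}=s_{1-k:T+k},A_{1-k:T+k}=a_{1-k:T+k},O_{t-1}=o_{t-1},B_t=b_t)$.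 Constants: $\epsilon_b>0$ is a constant for which there is a conditional distribution $\bar\pi_{o,b}(o_t,b_t\mid s_t;\theta)$ on $\mathcal O\times\{0,1\}$ with $0<\epsilon_b\zeta\bar\pi_{o,b}(o_t,b_t\mid s_t;\theta)\le\pi_b(b_t\mid s_t,o_{t-1};\theta_b)\bar\pi_{hi}(o_t\mid s_t,o_{t-1},b_t;\theta_{hi})\le\epsilon_b^{-1}|\mathcal O|\bar\pi_{o,b}(o_t,b_t\mid s_t;\theta)$ for all $\theta\in\Theta$ and all arguments. With $h(\theta;o_{t-1},s_t,a_t,o_t,b_t)=\pi_b(b_t\mid s_t,o_{t-1};\theta_b)\bar\pi_{hi}(o_t\mid s_t,o_{t-1},b_t;\theta_{hi})\pi_{lo}(a_t\mid s_t,o_t;\theta_{lo})$: $L_{\theta,\delta}$ is the smallest $L$ such that for all arguments $\tilde\theta\mapsto h(\tilde\theta;\cdot)$ is $L$-Lipschitz on $\{\tilde\theta\in\Theta:\|\tilde\theta-\theta\|_2\le\delta\}$; and $z_{\theta,\hat\theta}=\max_{s',a'}\frac{[\max_{o,o',b}h(\theta;o,s',a',o',b)]\vee[\max_{o,o',b}h(\hat\theta;o,s',a',o',b)]}{[\min_{o,o',b}h(\theta;o,s',a',o',b)][\min_{o,o',b}h(\hat\theta;o,s',a',o',b)]}$. $\|\nu_1-\nu_2\|_{TV}=\frac12\sum|\nu_1-\nu_2|$. *)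

theory Defs
  imports "HOL-Analysis.Analysis"
begin

(* Parameters are triples theta = (theta_hi, theta_lo, theta_b) in a product of Euclidean
   spaces; the norm on the product type is the Euclidean (L2) norm of the concatenation. *)

definition pibar_hi ::
  "('h \<Rightarrow> 's \<Rightarrow> 'o::finite \<Rightarrow> real) \<Rightarrow> real \<Rightarrow> 'h \<Rightarrow> 's \<Rightarrow> 'o \<Rightarrow> bool \<Rightarrow> 'o \<Rightarrow> real" where
  "pibar_hi pi_hi \<zeta> th s o_prev b q =
     (if b then pi_hi th s q
      else if q = o_prev then 1 - \<zeta> + \<zeta> / real (card (UNIV :: 'o set))
      else \<zeta> / real (card (UNIV :: 'o set)))"

text \<open>h(theta; o_{t-1}, s_t, a_t, o_t, b_t); pi_lo th s q a = pi_lo(a | s,q); pi_b th s q' b = pi_b(b | s,q').\<close>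
definition hfun ::
  "('h \<Rightarrow> 's \<Rightarrow> 'o::finite \<Rightarrow> real) \<Rightarrow> ('l \<Rightarrow> 's \<Rightarrow> 'o \<Rightarrow> 'a \<Rightarrow> real) \<Rightarrow> ('b \<Rightarrow> 's \<Rightarrow> 'o \<Rightarrow> bool \<Rightarrow> real)
    \<Rightarrow> real \<Rightarrow> ('h \<times> 'l \<times> 'b) \<Rightarrow> 'o \<Rightarrow> 's \<Rightarrow> 'a \<Rightarrow> 'o \<Rightarrow> bool \<Rightarrow> real" where
  "hfun pi_hi pi_lo pi_b \<zeta> \<theta> o_prev s a q b =
     pi_b (snd (snd \<theta>)) s o_prev b * pibar_hi pi_hi \<zeta> (fst \<theta>) s o_prev b q * pi_lo (fst (snd \<theta>)) s q a"

definition C1_on :: "'p::euclidean_space set \<Rightarrow> ('p \<Rightarrow> real) \<Rightarrow> bool" where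
  "C1_on U f \<longleftrightarrow> (\<exists>f'. (\<forall>x\<in>U. (f has_derivative blinfun_apply (f' x)) (at x)) \<and> continuous_on U f')"

text \<open>Latent trajectories (O_{lo-1..hi}, B_{lo..hi}).\<close>
definition latents :: "int \<Rightarrow> int \<Rightarrow> ((int \<Rightarrow> 'o) \<times> (int \<Rightarrow> bool)) set" where
  "latents lo hi = (PiE {lo - 1..hi} (\<lambda>_. UNIV)) \<times> (PiE {lo..hi} (\<lambda>_. UNIV))"

text \<open>Joint probability of O_{lo-1} (with weight init), the observations S_{lo..hi}, A_{lo..hi}
  (S_lo being fixed by the initial condition / included in init) and the latent trajectory.\<close>
definition path_weight ::
  "('p \<Rightarrow> 'o \<Rightarrow> 's \<Rightarrow> 'a \<Rightarrow> 'o \<Rightarrow> bool \<Rightarrow> real) \<Rightarrow> ('s \<Rightarrow> 'a \<Rightarrow> 's \<Rightarrow> real) \<Rightarrow> 'p \<Rightarrow> ('o \<Rightarrow> real)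
    \<Rightarrow> int \<Rightarrow> int \<Rightarrow> (int \<Rightarrow> 's) \<Rightarrow> (int \<Rightarrow> 'a) \<Rightarrow> (int \<Rightarrow> 'o) \<Rightarrow> (int \<Rightarrow> bool) \<Rightarrow> real" where
  "path_weight h P \<theta> init lo hi ss as os bs =
     init (os (lo - 1))
     * (\<Prod>t\<in>{lo..hi}. h \<theta> (os (t - 1)) (ss t) (as t) (os t) (bs t))
     * (\<Prod>t\<in>{lo..hi - 1}. P (ss t) (as t) (ss (t + 1)))"

text \<open>Unnormalised P(observations, O_t = q, B_t = b).\<close>
definition marg_ob ::
  "('p \<Rightarrow> 'o \<Rightarrow> 's \<Rightarrow> 'a \<Rightarrow> 'o \<Rightarrow> bool \<Rightarrow> real) \<Rightarrow> ('s \<Rightarrow> 'a \<Rightarrow> 's \<Rightarrow> real) \<Rightarrow> 'p \<Rightarrow> ('o \<Rightarrow> real)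
    \<Rightarrow> int \<Rightarrow> int \<Rightarrow> (int \<Rightarrow> 's) \<Rightarrow> (int \<Rightarrow> 'a) \<Rightarrow> int \<Rightarrow> 'o \<Rightarrow> bool \<Rightarrow> real" where
  "marg_ob h P \<theta> init lo hi ss as t q b =
     (\<Sum>(os, bs)\<in>latents lo hi \<inter> {(os, bs). os t = q \<and> bs t = b}. path_weight h P \<theta> init lo hi ss as os bs)"

text \<open>Unnormalised P(observations, O_{t-1} = q, B_t = b).\<close>
definition marg_prev ::
  "('p \<Rightarrow> 'o \<Rightarrow> 's \<Rightarrow> 'a \<Rightarrow> 'o \<Rightarrow> bool \<Rightarrow> real) \<Rightarrow> ('s \<Rightarrow> 'a \<Rightarrow> 's \<Rightarrow> real) \<Rightarrow> 'p \<Rightarrow> ('o \<Rightarrow> real)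
    \<Rightarrow> int \<Rightarrow> int \<Rightarrow> (int \<Rightarrow> 's) \<Rightarrow> (int \<Rightarrow> 'a) \<Rightarrow> int \<Rightarrow> 'o \<Rightarrow> bool \<Rightarrow> real" where
  "marg_prev h P \<theta> init lo hi ss as t q b =
     (\<Sum>(os, bs)\<in>latents lo hi \<inter> {(os, bs). os (t - 1) = q \<and> bs t = b}. path_weight h P \<theta> init lo hi ss as os bs)"

definition obs_prob ::
  "('p \<Rightarrow> 'o \<Rightarrow> 's \<Rightarrow> 'a \<Rightarrow> 'o \<Rightarrow> bool \<Rightarrow> real) \<Rightarrow> ('s \<Rightarrow> 'a \<Rightarrow> 's \<Rightarrow> real) \<Rightarrow> 'p \<Rightarrow> ('o \<Rightarrow> real)
    \<Rightarrow> int \<Rightarrow> int \<Rightarrow> (int \<Rightarrow> 's) \<Rightarrow> (int \<Rightarrow> 'a) \<Rightarrow> real" where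
  "obs_prob h P \<theta> init lo hi ss as =
     (\<Sum>(os, bs)\<in>latents lo hi. path_weight h P \<theta> init lo hi ss as os bs)"

definition normalize :: "('x::finite \<Rightarrow> real) \<Rightarrow> 'x \<Rightarrow> real" where
  "normalize f x = f x / (\<Sum>y\<in>UNIV. f y)"

definition tv_dist :: "('x::finite \<Rightarrow> real) \<Rightarrow> ('x \<Rightarrow> real) \<Rightarrow> real" where
  "tv_dist p q = (1/2) * (\<Sum>x\<in>UNIV. \<bar>p x - q x\<bar>)"

text \<open>gamma^theta_{mu,t|T}: O_0 ~ mu(.|s_1), process over times 1..T.\<close>
definition gamma_mu where
  "gamma_mu h P \<theta> \<mu> T ss as t =
     normalize (\<lambda>(q, b). marg_ob h P \<theta> (\<mu> (ss 1)) 1 T ss as t q b)"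

definition gamma_mu_tilde where
  "gamma_mu_tilde h P \<theta> \<mu> T ss as t =
     normalize (\<lambda>(q, b). marg_prev h P \<theta> (\<mu> (ss 1)) 1 T ss as t q b)"

text \<open>gamma^theta_{k,t}: (O_{-k}, S_{1-k}) ~ nu, process over times 1-k..T+k;
  nu q s = nu(O = q, S = s).\<close>
definition gamma_k where
  "gamma_k h P \<theta> \<nu> k T ss as t =
     normalize (\<lambda>(q, b). marg_ob h P \<theta> (\<lambda>q. \<nu> q (ss (1 - k))) (1 - k) (T + k) ss as t q b)"

definition gamma_k_tilde where
  "gamma_k_tilde h P \<theta> \<nu> k T ss as t =
     normalize (\<lambda>(q, b). marg_prev h P \<theta> (\<lambda>q. \<nu> q (ss (1 - k))) (1 - k) (T + k) ss as t q b)"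

text \<open>Transition kernel of the Markov chain (O_{t-1}, S_t) -> (O_t, S_{t+1}).\<close>
definition chain_kernel where
  "chain_kernel h P \<theta> q s q' s' = (\<Sum>b\<in>UNIV. \<Sum>a\<in>UNIV. h \<theta> q s a q' b * P s a s')"

definition stationary_dists ::
  "('p \<Rightarrow> 'o::finite \<Rightarrow> 's::finite \<Rightarrow> 'a::finite \<Rightarrow> 'o \<Rightarrow> bool \<Rightarrow> real) \<Rightarrow> ('s \<Rightarrow> 'a \<Rightarrow> 's \<Rightarrow> real) \<Rightarrow> 'p
     \<Rightarrow> ('o \<Rightarrow> 's \<Rightarrow> real) set" where
  "stationary_dists h P \<theta> =
     {\<nu>. (\<forall>q s. 0 \<le> \<nu> q s) \<and> (\<Sum>q\<in>UNIV. \<Sum>s\<in>UNIV. \<nu> q s) = 1 \<and>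
          (\<forall>q' s'. (\<Sum>q\<in>UNIV. \<Sum>s\<in>UNIV. \<nu> q s * chain_kernel h P \<theta> q s q' s') = \<nu> q' s')}"

definition extreme_point_in :: "('o \<Rightarrow> 's \<Rightarrow> real) \<Rightarrow> ('o \<Rightarrow> 's \<Rightarrow> real) set \<Rightarrow> bool" where
  "extreme_point_in \<nu> S \<longleftrightarrow> \<nu> \<in> S \<and>
     (\<forall>\<nu>1\<in>S. \<forall>\<nu>2\<in>S. \<forall>c::real. 0 < c \<and> c < 1 \<and> \<nu> = (\<lambda>q s. c * \<nu>1 q s + (1 - c) * \<nu>2 q s)
        \<longrightarrow> \<nu>1 = \<nu>2)"

definition Lconst ::
  "('p::metric_space \<Rightarrow> 'o \<Rightarrow> 's \<Rightarrow> 'a \<Rightarrow> 'o \<Rightarrow> bool \<Rightarrow> real) \<Rightarrow> 'p set \<Rightarrow> 'p \<Rightarrow> real \<Rightarrow> real" where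
  "Lconst h \<Theta> \<theta> \<delta> = Inf {L. \<forall>q s a q' b. lipschitz_on L (\<Theta> \<inter> cball \<theta> \<delta>) (\<lambda>\<theta>'. h \<theta>' q s a q' b)}"

definition zconst ::
  "('p \<Rightarrow> 'o::finite \<Rightarrow> 's::finite \<Rightarrow> 'a::finite \<Rightarrow> 'o \<Rightarrow> bool \<Rightarrow> real) \<Rightarrow> 'p \<Rightarrow> 'p \<Rightarrow> real" where
  "zconst h \<theta> \<theta>' = Max ((\<lambda>(s, a).
       max (Max ((\<lambda>(q, q', b). h \<theta> q s a q' b) ` UNIV)) (Max ((\<lambda>(q, q', b). h \<theta>' q s a q' b) ` UNIV))
       / (Min ((\<lambda>(q, q', b). h \<theta> q s a q' b) ` UNIV) * Min ((\<lambda>(q, q', b). h \<theta>' q s a q' b) ` UNIV))) ` UNIV)"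

end

theory Submission
  imports Defs
begin

lemma sum_normalize: "(\<Sum>x\<in>UNIV. normalize f x) = (if (\<Sum>x\<in>UNIV. f x) = 0 then 0 else 1)"
  by (simp add: normalize_def sum_divide_distrib[symmetric])

lemma normalize_nonneg: "(\<And>x. 0 \<le> f x) \<Longrightarrow> 0 \<le> normalize f x"
  by (simp add: normalize_def sum_nonneg)

lemma tv_triangle: "tv_dist p r \<le> tv_dist p q + tv_dist q r"
proof -
  have "(\<Sum>x\<in>UNIV. \<bar>p x - r x\<bar>) \<le> (\<Sum>x\<in>UNIV. \<bar>p x - q x\<bar> + \<bar>q x - r x\<bar>)"
    by (rule sum_mono) linarith
  then show ?thesis by (simp add: tv_dist_def sum.distrib)
qed

lemma tv_normalize_le1:
  assumes "\<And>x. 0 \<le> f x" "\<And>x. 0 \<le> g x"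
  shows "tv_dist (normalize f) (normalize g) \<le> 1"
proof -
  have "(\<Sum>x\<in>UNIV. \<bar>normalize f x - normalize g x\<bar>) \<le> (\<Sum>x\<in>UNIV. normalize f x + normalize g x)"
  proof (rule sum_mono)
    fix x
    have "0 \<le> normalize f x" "0 \<le> normalize g x" using normalize_nonneg assms by blast+
    then show "\<bar>normalize f x - normalize g x\<bar> \<le> normalize f x + normalize g x" by linarith
  qed
  also have "\<dots> \<le> 2" by (simp add: sum.distrib sum_normalize)
  finally show ?thesis by (simp add: tv_dist_def)
qed

lemma tv_nonneg: "0 \<le> tv_dist p q"
  by (simp add: tv_dist_def sum_nonneg)

lemma normalize_scale: "c \<noteq> 0 \<Longrightarrow> normalize (\<lambda>x. c * f x) = normalize f"
  by (rule ext) (simp add: normalize_def sum_distrib_left[symmetric])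

lemma pos_sum_of_nonneg_nz:
  fixes u :: "'x::finite \<Rightarrow> real"
  assumes "\<And>x. 0 \<le> u x" "u zz \<noteq> 0" "\<And>x. 0 < r x"
  shows "0 < (\<Sum>x\<in>UNIV. u x * r x)"
proof -
  have "0 < u zz * r zz" using assms by (metis less_eq_real_def mult_pos_pos)
  also have "\<dots> \<le> (\<Sum>x\<in>UNIV. u x * r x)"
    by (rule member_le_sum) (use assms in \<open>auto intro: mult_nonneg_nonneg less_imp_le\<close>)
  finally show ?thesis .
qed

lemma dobrushin:
  fixes A :: "'x::finite \<Rightarrow> 'y::finite \<Rightarrow> real" and m :: "'y \<Rightarrow> real"
  assumes A0: "\<And>x y. 0 \<le> A x y" and rpos: "\<And>x. 0 < (\<Sum>y\<in>UNIV. A x y)"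
    and m0: "\<And>y. 0 \<le> m y" and m1: "(\<Sum>y\<in>UNIV. m y) = 1"
    and minor: "\<And>x y. c * (\<Sum>y'\<in>UNIV. A x y') * m y \<le> A x y"
    and u0: "\<And>x. 0 \<le> u x" and v0: "\<And>x. 0 \<le> v x" and unz: "u xu \<noteq> 0" and vnz: "v xv \<noteq> 0"
  shows "tv_dist (normalize (\<lambda>y. \<Sum>x\<in>UNIV. u x * A x y)) (normalize (\<lambda>y. \<Sum>x\<in>UNIV. v x * A x y))
     \<le> (1 - c) * tv_dist (normalize (\<lambda>x. u x * (\<Sum>y\<in>UNIV. A x y))) (normalize (\<lambda>x. v x * (\<Sum>y\<in>UNIV. A x y)))"
proof -
  define r where "r x = (\<Sum>y\<in>UNIV. A x y)" for x
  define Q where "Q x y = A x y / r x" for x y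
  define pu where "pu = normalize (\<lambda>x. u x * r x)"
  define pv where "pv = normalize (\<lambda>x. v x * r x)"
  define U where "U = (\<Sum>x\<in>UNIV. u x * r x)"
  define V where "V = (\<Sum>x\<in>UNIV. v x * r x)"
  have rp: "0 < r x" for x using rpos r_def by auto
  have Up: "0 < U" unfolding U_def by (rule pos_sum_of_nonneg_nz[of u xu r, OF u0 unz rp])
  have Vp: "0 < V" unfolding V_def by (rule pos_sum_of_nonneg_nz[of v xv r, OF v0 vnz rp])
  have Qsum: "(\<Sum>y\<in>UNIV. Q x y) = 1" for x
    using rp[of x] by (simp add: Q_def sum_divide_distrib[symmetric] r_def[symmetric])
  have Qm: "c * m y \<le> Q x y" for x y
    using minor[of x y] rp[of x] by (simp add: Q_def r_def[symmetric] field_simps)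
  have key: "normalize (\<lambda>y. \<Sum>x\<in>UNIV. w x * A x y) y = (\<Sum>x\<in>UNIV. normalize (\<lambda>x. w x * r x) x * Q x y)"
    if W: "0 < (\<Sum>x\<in>UNIV. w x * r x)" for w y
  proof -
    have tot: "(\<Sum>y\<in>UNIV. \<Sum>x\<in>UNIV. w x * A x y) = (\<Sum>x\<in>UNIV. w x * r x)"
      by (subst sum.swap) (simp add: r_def sum_distrib_left)
    have "(\<Sum>x\<in>UNIV. w x * A x y) = (\<Sum>x\<in>UNIV. w x * r x * Q x y)"
    proof (rule sum.cong)
      fix x show "w x * A x y = w x * r x * Q x y" using rp[of x] by (simp add: Q_def)
    qed simp
    then show ?thesis
      by (simp add: normalize_def tot sum_divide_distrib[symmetric])
  qed
  have ku: "normalize (\<lambda>y. \<Sum>x\<in>UNIV. u x * A x y) y = (\<Sum>x\<in>UNIV. pu x * Q x y)" for y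
    unfolding pu_def using key Up U_def by blast
  have kv: "normalize (\<lambda>y. \<Sum>x\<in>UNIV. v x * A x y) y = (\<Sum>x\<in>UNIV. pv x * Q x y)" for y
    unfolding pv_def using key Vp V_def by blast
  have spu: "(\<Sum>x\<in>UNIV. pu x) = 1" using Up by (simp add: pu_def sum_normalize U_def)
  have spv: "(\<Sum>x\<in>UNIV. pv x) = 1" using Vp by (simp add: pv_def sum_normalize V_def)
  define d where "d x = pu x - pv x" for x
  have sd: "(\<Sum>x\<in>UNIV. d x) = 0" using spu spv by (simp add: d_def sum_subtractf)
  have step: "\<bar>(\<Sum>x\<in>UNIV. pu x * Q x y) - (\<Sum>x\<in>UNIV. pv x * Q x y)\<bar>
      \<le> (\<Sum>x\<in>UNIV. \<bar>d x\<bar> * (Q x y - c * m y))" for y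
  proof -
    have "(\<Sum>x\<in>UNIV. pu x * Q x y) - (\<Sum>x\<in>UNIV. pv x * Q x y) = (\<Sum>x\<in>UNIV. d x * Q x y)"
      by (simp add: d_def sum_subtractf left_diff_distrib)
    also have "\<dots> = (\<Sum>x\<in>UNIV. d x * (Q x y - c * m y))"
    proof -
      have "(\<Sum>x\<in>UNIV. d x * (Q x y - c * m y)) = (\<Sum>x\<in>UNIV. d x * Q x y) - (\<Sum>x\<in>UNIV. d x) * (c * m y)"
        by (simp add: right_diff_distrib sum_subtractf sum_distrib_right)
      then show ?thesis using sd by simp
    qed
    also have "\<bar>\<dots>\<bar> \<le> (\<Sum>x\<in>UNIV. \<bar>d x * (Q x y - c * m y)\<bar>)" by (rule sum_abs)
    also have "\<dots> = (\<Sum>x\<in>UNIV. \<bar>d x\<bar> * (Q x y - c * m y))"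
      by (rule sum.cong) (use Qm in \<open>auto simp: abs_mult\<close>)
    finally show ?thesis .
  qed
  have "(\<Sum>y\<in>UNIV. \<bar>(\<Sum>x\<in>UNIV. pu x * Q x y) - (\<Sum>x\<in>UNIV. pv x * Q x y)\<bar>)
      \<le> (\<Sum>y\<in>UNIV. \<Sum>x\<in>UNIV. \<bar>d x\<bar> * (Q x y - c * m y))"
    by (rule sum_mono) (rule step)
  also have "\<dots> = (\<Sum>x\<in>UNIV. \<bar>d x\<bar> * (\<Sum>y\<in>UNIV. (Q x y - c * m y)))"
    by (subst sum.swap) (simp add: sum_distrib_left)
  also have "\<dots> = (\<Sum>x\<in>UNIV. \<bar>d x\<bar> * (1 - c))"
    by (simp add: sum_subtractf Qsum sum_distrib_left[symmetric] m1)
  finally have "(\<Sum>y\<in>UNIV. \<bar>(\<Sum>x\<in>UNIV. pu x * Q x y) - (\<Sum>x\<in>UNIV. pv x * Q x y)\<bar>)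
      \<le> (1 - c) * (\<Sum>x\<in>UNIV. \<bar>d x\<bar>)" by (simp add: sum_distrib_left mult.commute)
  then show ?thesis
    by (simp add: tv_dist_def ku kv d_def pu_def pv_def r_def)
qed

lemma perturb:
  fixes p p' :: "'y::finite \<Rightarrow> real"
  assumes p0: "\<And>y. 0 \<le> p y" and p'0: "\<And>y. 0 \<le> p' y"
    and P: "0 < (\<Sum>y\<in>UNIV. p y)" and P': "0 < (\<Sum>y\<in>UNIV. p' y)"
    and close: "\<And>y. \<bar>p y - p' y\<bar> \<le> r * p y"
  shows "tv_dist (normalize p) (normalize p') \<le> r"
proof -
  define S where "S = (\<Sum>y\<in>UNIV. p y)"
  define S' where "S' = (\<Sum>y\<in>UNIV. p' y)"
  have Sp: "0 < S" "0 < S'" using P P' S_def S'_def by auto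
  have D: "(\<Sum>y\<in>UNIV. \<bar>p y - p' y\<bar>) \<le> r * S"
    unfolding S_def sum_distrib_left by (rule sum_mono) (rule close)
  have e: "\<bar>p y / S - p' y / S'\<bar> \<le> \<bar>p y - p' y\<bar> / S + p' y * \<bar>S' - S\<bar> / (S * S')" for y
  proof -
    have "p y / S - p' y / S' = (p y - p' y) / S + p' y * (S' - S) / (S * S')"
      using Sp by (simp add: field_simps)
    then have "\<bar>p y / S - p' y / S'\<bar> \<le> \<bar>(p y - p' y) / S\<bar> + \<bar>p' y * (S' - S) / (S * S')\<bar>"
      using abs_triangle_ineq[of "(p y - p' y) / S" "p' y * (S' - S) / (S * S')"] by simp
    also have "\<dots> = \<bar>p y - p' y\<bar> / S + p' y * \<bar>S' - S\<bar> / (S * S')"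
      using Sp p'0[of y] by (simp add: abs_mult abs_divide)
    finally show ?thesis .
  qed
  have "(\<Sum>y\<in>UNIV. \<bar>p y / S - p' y / S'\<bar>)
     \<le> (\<Sum>y\<in>UNIV. \<bar>p y - p' y\<bar> / S + p' y * \<bar>S' - S\<bar> / (S * S'))"
    by (rule sum_mono) (rule e)
  also have "\<dots> = (\<Sum>y\<in>UNIV. \<bar>p y - p' y\<bar>) / S + S' * \<bar>S' - S\<bar> / (S * S')"
    by (simp add: sum.distrib sum_divide_distrib[symmetric] sum_distrib_right[symmetric] S'_def)
  also have "\<dots> = (\<Sum>y\<in>UNIV. \<bar>p y - p' y\<bar>) / S + \<bar>S' - S\<bar> / S"
    using Sp by simp
  also have "\<bar>S' - S\<bar> \<le> (\<Sum>y\<in>UNIV. \<bar>p y - p' y\<bar>)"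
  proof -
    have "\<bar>S' - S\<bar> = \<bar>\<Sum>y\<in>UNIV. p y - p' y\<bar>" by (simp add: S_def S'_def sum_subtractf abs_minus_commute)
    also have "\<dots> \<le> (\<Sum>y\<in>UNIV. \<bar>p y - p' y\<bar>)" by (rule sum_abs)
    finally show ?thesis .
  qed
  hence "(\<Sum>y\<in>UNIV. \<bar>p y - p' y\<bar>) / S + \<bar>S' - S\<bar> / S \<le> 2 * (\<Sum>y\<in>UNIV. \<bar>p y - p' y\<bar>) / S"
    using Sp by (simp add: divide_right_mono add_divide_distrib[symmetric])
  also have "\<dots> \<le> 2 * r"
  proof -
    have "(\<Sum>y\<in>UNIV. \<bar>p y - p' y\<bar>) / S \<le> r" using D Sp by (simp add: divide_le_eq mult.commute)
    then show ?thesis by simp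
  qed
  finally show ?thesis
    by (simp add: tv_dist_def normalize_def S_def[symmetric] S'_def[symmetric])
qed

definition Kk :: "(int \<Rightarrow> 'o::finite \<Rightarrow> 'o \<Rightarrow> bool \<Rightarrow> real) \<Rightarrow> int \<Rightarrow> 'o \<Rightarrow> 'o \<Rightarrow> real" where
  "Kk \<kappa> s x y = (\<Sum>e\<in>UNIV. \<kappa> s x y e)"

fun fwd :: "(int \<Rightarrow> 'o::finite \<Rightarrow> 'o \<Rightarrow> bool \<Rightarrow> real) \<Rightarrow> ('o \<Rightarrow> real) \<Rightarrow> int \<Rightarrow> nat \<Rightarrow> 'o \<Rightarrow> real" where
  "fwd \<kappa> u lo 0 = u"
| "fwd \<kappa> u lo (Suc n) = (\<lambda>y. \<Sum>x\<in>UNIV. fwd \<kappa> u lo n x * Kk \<kappa> (lo + int n) x y)"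

fun bwd :: "(int \<Rightarrow> 'o::finite \<Rightarrow> 'o \<Rightarrow> bool \<Rightarrow> real) \<Rightarrow> ('o \<Rightarrow> real) \<Rightarrow> int \<Rightarrow> nat \<Rightarrow> 'o \<Rightarrow> real" where
  "bwd \<kappa> w hi 0 = w"
| "bwd \<kappa> w hi (Suc n) = (\<lambda>x. \<Sum>y\<in>UNIV. Kk \<kappa> (hi - int n) x y * bwd \<kappa> w hi n y)"

lemma fwd_add: "fwd \<kappa> u lo (m + n) = fwd \<kappa> (fwd \<kappa> u lo m) (lo + int m) n"
  by (induction n) (simp_all add: algebra_simps)

lemma bwd_add: "bwd \<kappa> w hi (m + n) = bwd \<kappa> (bwd \<kappa> w hi m) (hi - int m) n"
  by (induction n) (simp_all add: algebra_simps)

lemma fwd_last: "0 < n \<Longrightarrow> fwd \<kappa> u lo n = (\<lambda>y. \<Sum>x\<in>UNIV. fwd \<kappa> u lo (n - 1) x * Kk \<kappa> (lo + int n - 1) x y)"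
  by (cases n) (auto simp: algebra_simps)

lemma bwd_last: "0 < n \<Longrightarrow> bwd \<kappa> w hi n = (\<lambda>x. \<Sum>y\<in>UNIV. Kk \<kappa> (hi - int n + 1) x y * bwd \<kappa> w hi (n - 1) y)"
  by (cases n) (auto simp: algebra_simps)

lemma fwd_cong: "(\<And>s. lo \<le> s \<Longrightarrow> s < lo + int n \<Longrightarrow> \<kappa> s = \<kappa>' s) \<Longrightarrow> fwd \<kappa> u lo n = fwd \<kappa>' u lo n"
proof (induction n)
  case (Suc n)
  then have "fwd \<kappa> u lo n = fwd \<kappa>' u lo n" by simp
  moreover have "\<kappa> (lo + int n) = \<kappa>' (lo + int n)" using Suc.prems by simp
  ultimately show ?case by (simp add: Kk_def)
qed simp

lemma bwd_cong: "(\<And>s. hi - int n < s \<Longrightarrow> s \<le> hi \<Longrightarrow> \<kappa> s = \<kappa>' s) \<Longrightarrow> bwd \<kappa> w hi n = bwd \<kappa>' w hi n"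
proof (induction n)
  case (Suc n)
  then have "bwd \<kappa> w hi n = bwd \<kappa>' w hi n" by simp
  moreover have "\<kappa> (hi - int n) = \<kappa>' (hi - int n)" using Suc.prems by simp
  ultimately show ?case by (simp add: Kk_def)
qed simp

lemma duality: "(\<Sum>y\<in>UNIV. fwd \<kappa> v a n y * w y) = (\<Sum>x\<in>UNIV. v x * bwd \<kappa> w (a - 1 + int n) n x)"
proof (induction n arbitrary: w)
  case (Suc n)
  define w' where "w' = bwd \<kappa> w (a + int n) 1"
  have "(\<Sum>y\<in>UNIV. fwd \<kappa> v a (Suc n) y * w y) = (\<Sum>y\<in>UNIV. \<Sum>x\<in>UNIV. fwd \<kappa> v a n x * Kk \<kappa> (a + int n) x y * w y)"
    by (simp add: sum_distrib_right)
  also have "\<dots> = (\<Sum>x\<in>UNIV. fwd \<kappa> v a n x * w' x)"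
    by (subst sum.swap) (simp add: w'_def sum_distrib_left mult.assoc)
  also have "\<dots> = (\<Sum>x\<in>UNIV. v x * bwd \<kappa> w' (a - 1 + int n) n x)" by (rule Suc.IH)
  also have "bwd \<kappa> w' (a - 1 + int n) n = bwd \<kappa> w (a - 1 + int (Suc n)) (Suc n)"
    using bwd_add[of \<kappa> w "a + int n" 1 n] by (simp add: w'_def algebra_simps)
  finally show ?case .
qed simp

lemma sum_PiE_insert:
  assumes "finite S" "i \<notin> S"
  shows "(\<Sum>f\<in>PiE (insert i S) T. g f) = (\<Sum>y\<in>T i. \<Sum>f\<in>PiE S T. g (f(i:=y)))"
proof -
  have "(\<Sum>f\<in>PiE (insert i S) T. g f) = (\<Sum>p\<in>T i \<times> PiE S T. g ((\<lambda>(y, f). f(i := y)) p))"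
    unfolding PiE_insert_eq by (subst sum.reindex[OF inj_combinator[OF assms(2)]]) (simp add: comp_def)
  also have "\<dots> = (\<Sum>(y, f)\<in>T i \<times> PiE S T. g (f(i := y)))"
    by (rule sum.cong) (auto split: prod.split)
  also have "\<dots> = (\<Sum>y\<in>T i. \<Sum>f\<in>PiE S T. g (f(i:=y)))"
    by (simp add: sum.cartesian_product)
  finally show ?thesis .
qed

lemma finite_latents: "finite (latents lo hi :: ((int \<Rightarrow> 'o::finite) \<times> (int \<Rightarrow> bool)) set)"
  unfolding latents_def by (intro finite_cartesian_product finite_PiE) auto

lemma sum_latents:
  "(\<Sum>(os, bs)\<in>latents lo hi. g os bs) = (\<Sum>os\<in>PiE {lo-1..hi} (\<lambda>_. UNIV). \<Sum>bs\<in>PiE {lo..hi} (\<lambda>_. UNIV). g os bs)"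
  unfolding latents_def by (simp add: sum.cartesian_product)

lemma sum_latents_Suc:
  fixes g :: "(int \<Rightarrow> 'o::finite) \<Rightarrow> (int \<Rightarrow> bool) \<Rightarrow> real"
  assumes "lo - 1 \<le> hi"
  shows "(\<Sum>(os, bs)\<in>latents lo (hi + 1). g os bs)
       = (\<Sum>(os, bs)\<in>latents lo hi. \<Sum>y\<in>UNIV. \<Sum>e\<in>UNIV. g (os(hi+1:=y)) (bs(hi+1:=e)))"
proof -
  have e1: "{lo-1..hi+1} = insert (hi+1) {lo-1..hi}" using assms by auto
  have e2: "{lo..hi+1} = insert (hi+1) {lo..hi}" using assms by auto
  let ?S1 = "{lo-1..hi}" and ?S2 = "{lo..hi}" and ?i = "hi + 1"
  have "(\<Sum>os\<in>PiE (insert ?i ?S1) (\<lambda>_. UNIV). \<Sum>bs\<in>PiE (insert ?i ?S2) (\<lambda>_. UNIV). g os bs)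
      = (\<Sum>y\<in>UNIV. \<Sum>os\<in>PiE ?S1 (\<lambda>_. UNIV). \<Sum>bs\<in>PiE (insert ?i ?S2) (\<lambda>_. UNIV). g (os(?i:=y)) bs)"
    by (rule sum_PiE_insert) auto
  also have "\<dots> = (\<Sum>y\<in>UNIV. \<Sum>os\<in>PiE ?S1 (\<lambda>_. UNIV). \<Sum>e\<in>UNIV. \<Sum>bs\<in>PiE ?S2 (\<lambda>_. UNIV). g (os(?i:=y)) (bs(?i:=e)))"
    by (intro sum.cong refl sum_PiE_insert) auto
  also have "\<dots> = (\<Sum>os\<in>PiE ?S1 (\<lambda>_. UNIV). \<Sum>y\<in>UNIV. \<Sum>e\<in>UNIV. \<Sum>bs\<in>PiE ?S2 (\<lambda>_. UNIV). g (os(?i:=y)) (bs(?i:=e)))"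
    by (rule sum.swap)
  also have "\<dots> = (\<Sum>os\<in>PiE ?S1 (\<lambda>_. UNIV). \<Sum>y\<in>UNIV. \<Sum>bs\<in>PiE ?S2 (\<lambda>_. UNIV). \<Sum>e\<in>UNIV. g (os(?i:=y)) (bs(?i:=e)))"
    by (intro sum.cong refl sum.swap)
  also have "\<dots> = (\<Sum>os\<in>PiE ?S1 (\<lambda>_. UNIV). \<Sum>bs\<in>PiE ?S2 (\<lambda>_. UNIV). \<Sum>y\<in>UNIV. \<Sum>e\<in>UNIV. g (os(?i:=y)) (bs(?i:=e)))"
    by (intro sum.cong refl sum.swap)
  finally show ?thesis
    unfolding sum_latents e1 e2 .
qed

definition pw :: "(int \<Rightarrow> 'o \<Rightarrow> 'o \<Rightarrow> bool \<Rightarrow> real) \<Rightarrow> ('o \<Rightarrow> real) \<Rightarrow> int \<Rightarrow> int \<Rightarrow> (int \<Rightarrow> 'o) \<Rightarrow> (int \<Rightarrow> bool) \<Rightarrow> real" where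
  "pw \<kappa> init lo hi os bs = init (os (lo - 1)) * (\<Prod>s\<in>{lo..hi}. \<kappa> s (os (s - 1)) (os s) (bs s))"

lemma pw_upd:
  assumes "lo - 1 \<le> hi"
  shows "pw \<kappa> init lo (hi + 1) (os(hi+1:=y)) (bs(hi+1:=e)) = pw \<kappa> init lo hi os bs * \<kappa> (hi + 1) (os hi) y e"
proof -
  have e2: "{lo..hi+1} = insert (hi+1) {lo..hi}" using assms by auto
  have "(\<Prod>s\<in>{lo..hi}. \<kappa> s ((os(hi+1:=y)) (s - 1)) ((os(hi+1:=y)) s) ((bs(hi+1:=e)) s))
      = (\<Prod>s\<in>{lo..hi}. \<kappa> s (os (s - 1)) (os s) (bs s))"
    by (rule prod.cong) auto
  then show ?thesis
    unfolding pw_def e2 using assms by (simp add: mult.assoc mult.commute mult.left_commute)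
qed

lemma path_sum:
  fixes \<kappa> :: "int \<Rightarrow> 'o::finite \<Rightarrow> 'o \<Rightarrow> bool \<Rightarrow> real"
  shows "(\<Sum>(os, bs)\<in>latents lo (lo - 1 + int n). pw \<kappa> init lo (lo - 1 + int n) os bs * G (os (lo - 1 + int n)))
     = (\<Sum>y\<in>UNIV. fwd \<kappa> init lo n y * G y)"
proof (induction n arbitrary: G)
  case 0
  show ?case unfolding sum_latents pw_def
    using sum_PiE_insert[where S="{}" and i="lo-1" and T="\<lambda>_. UNIV" and g="\<lambda>os. init (os (lo-1)) * G (os (lo-1))"] by simp
next
  case (Suc n)
  define hi where "hi = lo - 1 + int n"
  have hi: "lo - 1 \<le> hi" by (simp add: hi_def)
  have e: "lo - 1 + int (Suc n) = hi + 1" by (simp add: hi_def)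
  define G' where "G' x = (\<Sum>y\<in>UNIV. Kk \<kappa> (hi + 1) x y * G y)" for x
  have "(\<Sum>(os, bs)\<in>latents lo (hi + 1). pw \<kappa> init lo (hi + 1) os bs * G (os (hi + 1)))
      = (\<Sum>(os, bs)\<in>latents lo hi. \<Sum>y\<in>UNIV. \<Sum>e\<in>UNIV. pw \<kappa> init lo hi os bs * \<kappa> (hi + 1) (os hi) y e * G y)"
    by (subst sum_latents_Suc[OF hi]) (simp add: pw_upd[OF hi])
  also have "\<dots> = (\<Sum>(os, bs)\<in>latents lo hi. pw \<kappa> init lo hi os bs * G' (os hi))"
    by (rule sum.cong) (auto simp: G'_def Kk_def sum_distrib_left sum_distrib_right mult.assoc intro!: sum.cong)
  also have "\<dots> = (\<Sum>y\<in>UNIV. fwd \<kappa> init lo n y * G' y)"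
    using Suc.IH[of G'] by (simp add: hi_def)
  also have "\<dots> = (\<Sum>y\<in>UNIV. fwd \<kappa> init lo (Suc n) y * G y)"
    by (simp add: G'_def sum_distrib_left sum_distrib_right hi_def mult.assoc algebra_simps)
       (subst sum.swap, simp)
  finally have R: "(\<Sum>(os, bs)\<in>latents lo (hi + 1). pw \<kappa> init lo (hi + 1) os bs * G (os (hi + 1)))
     = (\<Sum>y\<in>UNIV. fwd \<kappa> init lo (Suc n) y * G y)" .
  show ?case unfolding e by (rule R)
qed

definition kmask :: "(int \<Rightarrow> 'o \<Rightarrow> 'o \<Rightarrow> bool \<Rightarrow> real) \<Rightarrow> int \<Rightarrow> ('o \<Rightarrow> 'o \<Rightarrow> bool \<Rightarrow> real) \<Rightarrow> int \<Rightarrow> 'o \<Rightarrow> 'o \<Rightarrow> bool \<Rightarrow> real" where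
  "kmask \<kappa> t ind s x y e = \<kappa> s x y e * (if s = t then ind x y e else 1)"

lemma pw_kmask:
  assumes "lo \<le> t" "t \<le> hi"
  shows "pw (kmask \<kappa> t ind) init lo hi os bs = pw \<kappa> init lo hi os bs * ind (os (t - 1)) (os t) (bs t)"
proof -
  have "(\<Prod>s\<in>{lo..hi}. kmask \<kappa> t ind s (os (s - 1)) (os s) (bs s))
     = (\<Prod>s\<in>{lo..hi}. \<kappa> s (os (s - 1)) (os s) (bs s)) * (\<Prod>s\<in>{lo..hi}. if s = t then ind (os (s - 1)) (os s) (bs s) else 1)"
    by (simp add: kmask_def prod.distrib)
  also have "(\<Prod>s\<in>{lo..hi}. if s = t then ind (os (s - 1)) (os s) (bs s) else 1) = ind (os (t - 1)) (os t) (bs t)"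
    using assms by (simp add: prod.delta)
  finally show ?thesis by (simp add: pw_def mult.assoc)
qed

lemma masked_total:
  fixes \<kappa> :: "int \<Rightarrow> 'o::finite \<Rightarrow> 'o \<Rightarrow> bool \<Rightarrow> real"
  assumes "lo \<le> t" "t \<le> hi"
  shows "(\<Sum>(os, bs)\<in>latents lo hi. pw \<kappa> init lo hi os bs * ind (os (t - 1)) (os t) (bs t))
    = (\<Sum>x\<in>UNIV. \<Sum>y\<in>UNIV. \<Sum>e\<in>UNIV. fwd \<kappa> init lo (nat (t - lo)) x * \<kappa> t x y e * ind x y e * bwd \<kappa> (\<lambda>_. 1) hi (nat (hi - t)) y)"
proof -
  define \<kappa>' where "\<kappa>' = kmask \<kappa> t ind"
  define m where "m = nat (t - lo)"
  define n where "n = nat (hi - t)"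
  have hi: "hi = lo - 1 + int (m + (1 + n))" using assms by (simp add: m_def n_def)
  have "(\<Sum>(os, bs)\<in>latents lo hi. pw \<kappa> init lo hi os bs * ind (os (t - 1)) (os t) (bs t))
      = (\<Sum>(os, bs)\<in>latents lo hi. pw \<kappa>' init lo hi os bs * (\<lambda>_. 1) (os hi))"
    by (rule sum.cong) (auto simp: \<kappa>'_def pw_kmask[OF assms])
  also have "\<dots> = (\<Sum>y\<in>UNIV. fwd \<kappa>' init lo (m + (1 + n)) y * 1)"
    using path_sum[of \<kappa>' init lo "m + (1 + n)" "\<lambda>_. 1"] hi by simp
  also have "fwd \<kappa>' init lo (m + (1 + n)) = fwd \<kappa>' (fwd \<kappa>' (fwd \<kappa>' init lo m) t 1) (t + 1) n"
  proof -
    have t1: "lo + int m = t" "lo + int (m + 1) = t + 1" using assms by (simp_all add: m_def)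
    have "fwd \<kappa>' init lo (m + (1 + n)) = fwd \<kappa>' init lo ((m + 1) + n)" by (simp add: add.assoc)
    also have "\<dots> = fwd \<kappa>' (fwd \<kappa>' init lo (m + 1)) (t + 1) n" using fwd_add[of \<kappa>' init lo "m + 1" n] by (simp only: t1)
    also have "fwd \<kappa>' init lo (m + 1) = fwd \<kappa>' (fwd \<kappa>' init lo m) t 1" using fwd_add[of \<kappa>' init lo m 1] by (simp only: t1)
    finally show ?thesis .
  qed
  also have "fwd \<kappa>' init lo m = fwd \<kappa> init lo m"
    by (rule fwd_cong) (use assms in \<open>auto simp: \<kappa>'_def kmask_def m_def fun_eq_iff\<close>)
  also have "(\<Sum>y\<in>UNIV. fwd \<kappa>' (fwd \<kappa>' (fwd \<kappa> init lo m) t 1) (t + 1) n y * 1)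
      = (\<Sum>x\<in>UNIV. fwd \<kappa>' (fwd \<kappa> init lo m) t 1 x * bwd \<kappa>' (\<lambda>_. 1) (t + 1 - 1 + int n) n x)"
    by (rule duality)
  also have "t + 1 - 1 + int n = hi" using assms by (simp add: n_def)
  also have "bwd \<kappa>' (\<lambda>_. 1) hi n = bwd \<kappa> (\<lambda>_. 1) hi n"
    by (rule bwd_cong) (use assms in \<open>auto simp: \<kappa>'_def kmask_def n_def fun_eq_iff\<close>)
  also have "(\<Sum>x\<in>UNIV. fwd \<kappa>' (fwd \<kappa> init lo m) t 1 x * bwd \<kappa> (\<lambda>_. 1) hi n x)
     = (\<Sum>y\<in>UNIV. \<Sum>x\<in>UNIV. \<Sum>e\<in>UNIV. fwd \<kappa> init lo m x * \<kappa> t x y e * ind x y e * bwd \<kappa> (\<lambda>_. 1) hi n y)"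
    by (simp add: Kk_def \<kappa>'_def kmask_def sum_distrib_left sum_distrib_right mult.assoc)
  also have "\<dots> = (\<Sum>x\<in>UNIV. \<Sum>y\<in>UNIV. \<Sum>e\<in>UNIV. fwd \<kappa> init lo m x * \<kappa> t x y e * ind x y e * bwd \<kappa> (\<lambda>_. 1) hi n y)"
    by (rule sum.swap)
  finally show ?thesis by (simp add: m_def n_def)
qed

lemma sum2_delta1:
  fixes g :: "'o::finite \<Rightarrow> bool \<Rightarrow> real"
  shows "(\<Sum>y\<in>UNIV. \<Sum>e\<in>UNIV. (if y = q \<and> e = b then g y e else 0)) = (g q b :: real)"
proof -
  have "(\<Sum>e\<in>UNIV. (if y = q \<and> e = b then g y e else 0)) = (if y = q then g y b else 0)" for y
    by (cases "y = q") (simp_all add: sum.delta)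
  then show ?thesis by simp
qed

lemma sum3_delta2:
  fixes g :: "'o::finite \<Rightarrow> 'o \<Rightarrow> bool \<Rightarrow> real"
  shows "(\<Sum>x\<in>UNIV. \<Sum>y\<in>UNIV. \<Sum>e\<in>UNIV. (if x = q \<and> e = b then g x y e else 0)) = (\<Sum>y\<in>UNIV. g q y b :: real)"
proof -
  have "(\<Sum>y\<in>UNIV. \<Sum>e\<in>UNIV. (if x = q \<and> e = b then g x y e else 0)) = (if x = q then (\<Sum>y\<in>UNIV. g x y b) else 0)" for x
    by (cases "x = q") (simp_all add: sum.delta)
  then show ?thesis by simp
qed

definition kap :: "('p \<Rightarrow> 'o \<Rightarrow> 's \<Rightarrow> 'a \<Rightarrow> 'o \<Rightarrow> bool \<Rightarrow> real) \<Rightarrow> 'p \<Rightarrow> (int \<Rightarrow> 's) \<Rightarrow> (int \<Rightarrow> 'a) \<Rightarrow> int \<Rightarrow> 'o \<Rightarrow> 'o \<Rightarrow> bool \<Rightarrow> real" where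
  "kap h \<theta> ss as s x y e = h \<theta> x (ss s) (as s) y e"

definition Pc :: "('s \<Rightarrow> 'a \<Rightarrow> 's \<Rightarrow> real) \<Rightarrow> int \<Rightarrow> int \<Rightarrow> (int \<Rightarrow> 's) \<Rightarrow> (int \<Rightarrow> 'a) \<Rightarrow> real" where
  "Pc P lo hi ss as = (\<Prod>s\<in>{lo..hi - 1}. P (ss s) (as s) (ss (s + 1)))"

lemma path_weight_pw: "path_weight h P \<theta> init lo hi ss as os bs = pw (kap h \<theta> ss as) init lo hi os bs * Pc P lo hi ss as"
  by (simp add: path_weight_def pw_def kap_def Pc_def)

lemma marg_ob_eq:
  fixes h :: "'p \<Rightarrow> 'o::finite \<Rightarrow> 's \<Rightarrow> 'a \<Rightarrow> 'o \<Rightarrow> bool \<Rightarrow> real"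
  assumes "lo \<le> t" "t \<le> hi"
  shows "marg_ob h P \<theta> init lo hi ss as t q b = Pc P lo hi ss as *
     ((\<Sum>x\<in>UNIV. fwd (kap h \<theta> ss as) init lo (nat (t - lo)) x * kap h \<theta> ss as t x q b) * bwd (kap h \<theta> ss as) (\<lambda>_. 1) hi (nat (hi - t)) q)"
proof -
  let ?\<kappa> = "kap h \<theta> ss as"
  define ind :: "'o \<Rightarrow> 'o \<Rightarrow> bool \<Rightarrow> real" where "ind x y e = (if y = q \<and> e = b then 1 else 0)" for x y e
  have "marg_ob h P \<theta> init lo hi ss as t q b
     = (\<Sum>(os, bs)\<in>latents lo hi. pw ?\<kappa> init lo hi os bs * ind (os (t - 1)) (os t) (bs t)) * Pc P lo hi ss as"
    unfolding marg_ob_def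
    by (subst sum.inter_restrict[OF finite_latents]) (auto simp: path_weight_pw ind_def sum_distrib_right intro!: sum.cong)
  also have "\<dots> = (\<Sum>x\<in>UNIV. \<Sum>y\<in>UNIV. \<Sum>e\<in>UNIV. fwd ?\<kappa> init lo (nat (t - lo)) x * ?\<kappa> t x y e * ind x y e * bwd ?\<kappa> (\<lambda>_. 1) hi (nat (hi - t)) y) * Pc P lo hi ss as"
    by (simp add: masked_total[OF assms])
  also have "(\<Sum>x\<in>UNIV. \<Sum>y\<in>UNIV. \<Sum>e\<in>UNIV. fwd ?\<kappa> init lo (nat (t - lo)) x * ?\<kappa> t x y e * ind x y e * bwd ?\<kappa> (\<lambda>_. 1) hi (nat (hi - t)) y)
     = (\<Sum>x\<in>UNIV. fwd ?\<kappa> init lo (nat (t - lo)) x * ?\<kappa> t x q b) * bwd ?\<kappa> (\<lambda>_. 1) hi (nat (hi - t)) q"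
  proof -
    have "(\<Sum>x\<in>UNIV. \<Sum>y\<in>UNIV. \<Sum>e\<in>UNIV. fwd ?\<kappa> init lo (nat (t - lo)) x * ?\<kappa> t x y e * ind x y e * bwd ?\<kappa> (\<lambda>_. 1) hi (nat (hi - t)) y)
      = (\<Sum>x\<in>UNIV. \<Sum>y\<in>UNIV. \<Sum>e\<in>UNIV. (if y = q \<and> e = b then fwd ?\<kappa> init lo (nat (t - lo)) x * ?\<kappa> t x y e * bwd ?\<kappa> (\<lambda>_. 1) hi (nat (hi - t)) y else 0))"
      by (intro sum.cong refl) (simp add: ind_def)
    also have "\<dots> = (\<Sum>x\<in>UNIV. fwd ?\<kappa> init lo (nat (t - lo)) x * ?\<kappa> t x q b * bwd ?\<kappa> (\<lambda>_. 1) hi (nat (hi - t)) q)"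
      by (subst sum2_delta1) simp
    finally show ?thesis by (simp add: sum_distrib_right)
  qed
  finally show ?thesis by simp
qed

lemma marg_prev_eq:
  fixes h :: "'p \<Rightarrow> 'o::finite \<Rightarrow> 's \<Rightarrow> 'a \<Rightarrow> 'o \<Rightarrow> bool \<Rightarrow> real"
  assumes "lo \<le> t" "t \<le> hi"
  shows "marg_prev h P \<theta> init lo hi ss as t q b = Pc P lo hi ss as *
     (fwd (kap h \<theta> ss as) init lo (nat (t - lo)) q * (\<Sum>y\<in>UNIV. kap h \<theta> ss as t q y b * bwd (kap h \<theta> ss as) (\<lambda>_. 1) hi (nat (hi - t)) y))"
proof -
  let ?\<kappa> = "kap h \<theta> ss as"
  define ind :: "'o \<Rightarrow> 'o \<Rightarrow> bool \<Rightarrow> real" where "ind x y e = (if x = q \<and> e = b then 1 else 0)" for x y e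
  have "marg_prev h P \<theta> init lo hi ss as t q b
     = (\<Sum>(os, bs)\<in>latents lo hi. pw ?\<kappa> init lo hi os bs * ind (os (t - 1)) (os t) (bs t)) * Pc P lo hi ss as"
    unfolding marg_prev_def
    by (subst sum.inter_restrict[OF finite_latents]) (auto simp: path_weight_pw ind_def sum_distrib_right intro!: sum.cong)
  also have "\<dots> = (\<Sum>x\<in>UNIV. \<Sum>y\<in>UNIV. \<Sum>e\<in>UNIV. fwd ?\<kappa> init lo (nat (t - lo)) x * ?\<kappa> t x y e * ind x y e * bwd ?\<kappa> (\<lambda>_. 1) hi (nat (hi - t)) y) * Pc P lo hi ss as"
    by (simp add: masked_total[OF assms])
  also have "(\<Sum>x\<in>UNIV. \<Sum>y\<in>UNIV. \<Sum>e\<in>UNIV. fwd ?\<kappa> init lo (nat (t - lo)) x * ?\<kappa> t x y e * ind x y e * bwd ?\<kappa> (\<lambda>_. 1) hi (nat (hi - t)) y)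
     = fwd ?\<kappa> init lo (nat (t - lo)) q * (\<Sum>y\<in>UNIV. ?\<kappa> t q y b * bwd ?\<kappa> (\<lambda>_. 1) hi (nat (hi - t)) y)"
  proof -
    have "(\<Sum>x\<in>UNIV. \<Sum>y\<in>UNIV. \<Sum>e\<in>UNIV. fwd ?\<kappa> init lo (nat (t - lo)) x * ?\<kappa> t x y e * ind x y e * bwd ?\<kappa> (\<lambda>_. 1) hi (nat (hi - t)) y)
      = (\<Sum>x\<in>UNIV. \<Sum>y\<in>UNIV. \<Sum>e\<in>UNIV. (if x = q \<and> e = b then fwd ?\<kappa> init lo (nat (t - lo)) x * ?\<kappa> t x y e * bwd ?\<kappa> (\<lambda>_. 1) hi (nat (hi - t)) y else 0))"
      by (intro sum.cong refl) (simp add: ind_def)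
    also have "\<dots> = (\<Sum>y\<in>UNIV. fwd ?\<kappa> init lo (nat (t - lo)) q * ?\<kappa> t q y b * bwd ?\<kappa> (\<lambda>_. 1) hi (nat (hi - t)) y)"
      by (rule sum3_delta2)
    finally show ?thesis by (simp add: sum_distrib_left mult.assoc)
  qed
  finally show ?thesis by simp
qed

definition good :: "(int \<Rightarrow> 'o::finite \<Rightarrow> 'o \<Rightarrow> bool \<Rightarrow> real) \<Rightarrow> real \<Rightarrow> bool" where
  "good \<kappa> c \<longleftrightarrow> 0 \<le> c \<and> (\<forall>s x y e. 0 < \<kappa> s x y e) \<and> (\<forall>s x x' y e. c * \<kappa> s x' y e \<le> \<kappa> s x y e)"

lemma good_pos: "good \<kappa> c \<Longrightarrow> 0 < \<kappa> s x y e" by (simp add: good_def)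
lemma good_ratio: "good \<kappa> c \<Longrightarrow> c * \<kappa> s x' y e \<le> \<kappa> s x y e" by (simp add: good_def)
lemma good_c: "good \<kappa> c \<Longrightarrow> 0 \<le> c" by (simp add: good_def)
lemma good_c1: assumes "good \<kappa> c" shows "c \<le> 1"
proof -
  have "c * \<kappa> 0 x y e \<le> 1 * \<kappa> 0 x y e" for x y e using good_ratio[OF assms] by simp
  moreover have "0 < \<kappa> 0 x y e" for x y e using good_pos[OF assms] .
  ultimately show ?thesis by (meson mult_le_cancel_right_pos)
qed

lemma Kk_pos: "good \<kappa> c \<Longrightarrow> 0 < Kk \<kappa> s x y"
  unfolding Kk_def by (rule sum_pos) (auto intro: good_pos)

lemma Kk_ratio: "good \<kappa> c \<Longrightarrow> c * Kk \<kappa> s x' y \<le> Kk \<kappa> s x y"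
  unfolding Kk_def sum_distrib_left by (rule sum_mono) (rule good_ratio)

lemma fwd_nonneg: "good \<kappa> c \<Longrightarrow> (\<And>x. 0 \<le> u x) \<Longrightarrow> 0 \<le> fwd \<kappa> u lo n y"
  by (induction n arbitrary: y) (auto intro!: sum_nonneg mult_nonneg_nonneg less_imp_le[OF Kk_pos])

lemma fwd_nz: assumes "good \<kappa> c" "\<And>x. 0 \<le> u x" "u zz \<noteq> 0" shows "\<exists>x. fwd \<kappa> u lo n x \<noteq> 0"
proof (induction n)
  case 0 then show ?case using assms by auto
next
  case (Suc n)
  then obtain x1 where x1: "fwd \<kappa> u lo n x1 \<noteq> 0" by auto
  have "0 \<le> fwd \<kappa> u lo n x1" by (rule fwd_nonneg[OF assms(1,2)])
  with x1 have "0 < fwd \<kappa> u lo n x1" by linarith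
  then have "0 < fwd \<kappa> u lo n x1 * Kk \<kappa> (lo + int n) x1 zz"
    using Kk_pos[OF assms(1)] by (simp add: mult_pos_pos)
  also have "\<dots> \<le> (\<Sum>x\<in>UNIV. fwd \<kappa> u lo n x * Kk \<kappa> (lo + int n) x zz)"
    by (rule member_le_sum) (auto intro!: mult_nonneg_nonneg fwd_nonneg[OF assms(1,2)] less_imp_le[OF Kk_pos[OF assms(1)]])
  finally show ?case by (intro exI[of _ zz]) simp
qed

lemma bwd_pos: "good \<kappa> c \<Longrightarrow> (\<And>x. 0 < w x) \<Longrightarrow> 0 < bwd \<kappa> w hi n x"
  by (induction n arbitrary: x) (auto intro!: sum_pos mult_pos_pos Kk_pos)

lemma minor_fwd:
  fixes K :: "'x::finite \<Rightarrow> 'y::finite \<Rightarrow> real"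
  assumes Kp: "\<And>x y. 0 < K x y" and rat: "\<And>x x' y. c * K x' y \<le> K x y" and c0: "0 \<le> c"
    and bp: "\<And>y. 0 < \<beta> y"
  shows "\<exists>m. (\<forall>y. 0 \<le> m y) \<and> (\<Sum>y\<in>UNIV. m y) = 1 \<and> (\<forall>x y. c * (\<Sum>y'\<in>UNIV. K x y' * \<beta> y') * m y \<le> K x y * \<beta> y)"
proof -
  define g where "g y = Max (range (\<lambda>x. K x y))" for y
  have gge: "K x y \<le> g y" for x y unfolding g_def by (rule Max_ge) auto
  have gin: "\<exists>x. g y = K x y" for y
  proof -
    have "Max (range (\<lambda>x. K x y)) \<in> range (\<lambda>x. K x y)" by (rule Max_in) auto
    then obtain x where "Max (range (\<lambda>x. K x y)) = K x y" by (auto simp del: Max_in)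
    then show ?thesis by (auto simp: g_def)
  qed
  define S where "S = (\<Sum>y\<in>UNIV. g y * \<beta> y)"
  have gp: "0 < g y" for y using gge[of undefined y] Kp[of undefined y] by linarith
  have Sp: "0 < S" unfolding S_def by (rule sum_pos) (auto intro: mult_pos_pos gp bp)
  define m where "m y = g y * \<beta> y / S" for y
  have m0: "0 \<le> m y" for y using gp bp Sp by (simp add: m_def less_imp_le)
  have m1: "(\<Sum>y\<in>UNIV. m y) = 1" using Sp by (simp add: m_def sum_divide_distrib[symmetric] S_def[symmetric])
  have "c * (\<Sum>y'\<in>UNIV. K x y' * \<beta> y') * m y \<le> K x y * \<beta> y" for x y
  proof -
    have "(\<Sum>y'\<in>UNIV. K x y' * \<beta> y') \<le> S"
      unfolding S_def by (rule sum_mono) (use gge bp in \<open>auto intro: mult_right_mono less_imp_le\<close>)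
    hence "c * (\<Sum>y'\<in>UNIV. K x y' * \<beta> y') * m y \<le> c * S * m y"
      using c0 m0 by (intro mult_right_mono mult_left_mono) auto
    also have "\<dots> = c * g y * \<beta> y" using Sp by (simp add: m_def)
    also have "\<dots> \<le> K x y * \<beta> y"
    proof -
      obtain x' where "g y = K x' y" using gin by blast
      then have "c * g y \<le> K x y" using rat by simp
      then show ?thesis using bp[of y] by (simp add: mult_right_mono less_imp_le)
    qed
    finally show ?thesis .
  qed
  then show ?thesis using m0 m1 by blast
qed

lemma minor_bwd:
  fixes K :: "'x::finite \<Rightarrow> 'y::finite \<Rightarrow> real"
  assumes rat: "\<And>x x' y. c * K x' y \<le> K x y" and F0: "\<And>x. 0 \<le> F x" and Fnz: "F x0 \<noteq> 0"
  shows "\<exists>m. (\<forall>x. 0 \<le> m x) \<and> (\<Sum>x\<in>UNIV. m x) = 1 \<and> (\<forall>y x. c * (\<Sum>x'\<in>UNIV. F x' * K x' y) * m x \<le> F x * K x y)"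
proof -
  define S where "S = (\<Sum>x\<in>UNIV. F x)"
  have Sp: "0 < S"
  proof -
    have "0 < F x0" using F0[of x0] Fnz by linarith
    also have "\<dots> \<le> S" unfolding S_def by (rule member_le_sum) (auto intro: F0)
    finally show ?thesis .
  qed
  define m where "m x = F x / S" for x
  have m0: "0 \<le> m x" for x using F0 Sp by (simp add: m_def)
  have m1: "(\<Sum>x\<in>UNIV. m x) = 1" using Sp by (simp add: m_def sum_divide_distrib[symmetric] S_def[symmetric])
  have "c * (\<Sum>x'\<in>UNIV. F x' * K x' y) * m x \<le> F x * K x y" for x y
  proof -
    have "c * (\<Sum>x'\<in>UNIV. F x' * K x' y) \<le> (\<Sum>x'\<in>UNIV. F x' * K x y)"
      unfolding sum_distrib_left
    proof (rule sum_mono)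
      fix x' show "c * (F x' * K x' y) \<le> F x' * K x y"
        using mult_left_mono[OF rat[where x=x and x'=x' and y=y] F0[of x']] by (simp add: algebra_simps)
    qed
    also have "\<dots> = S * K x y" by (simp add: S_def sum_distrib_right)
    finally have "c * (\<Sum>x'\<in>UNIV. F x' * K x' y) * m x \<le> S * K x y * m x"
      using m0 by (simp add: mult_right_mono)
    also have "\<dots> = F x * K x y" using Sp by (simp add: m_def)
    finally show ?thesis .
  qed
  then show ?thesis using m0 m1 by blast
qed

lemma dobrushin0:
  fixes A :: "'x::finite \<Rightarrow> 'y::finite \<Rightarrow> real"
  assumes A0: "\<And>x y. 0 \<le> A x y" and rpos: "\<And>x. 0 < (\<Sum>y\<in>UNIV. A x y)"
    and u0: "\<And>x. 0 \<le> u x" and v0: "\<And>x. 0 \<le> v x" and unz: "u xu \<noteq> 0" and vnz: "v xv \<noteq> 0"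
  shows "tv_dist (normalize (\<lambda>y. \<Sum>x\<in>UNIV. u x * A x y)) (normalize (\<lambda>y. \<Sum>x\<in>UNIV. v x * A x y))
     \<le> tv_dist (normalize (\<lambda>x. u x * (\<Sum>y\<in>UNIV. A x y))) (normalize (\<lambda>x. v x * (\<Sum>y\<in>UNIV. A x y)))"
proof -
  have "tv_dist (normalize (\<lambda>y. \<Sum>x\<in>UNIV. u x * A x y)) (normalize (\<lambda>y. \<Sum>x\<in>UNIV. v x * A x y))
     \<le> (1 - 0) * tv_dist (normalize (\<lambda>x. u x * (\<Sum>y\<in>UNIV. A x y))) (normalize (\<lambda>x. v x * (\<Sum>y\<in>UNIV. A x y)))"
    by (rule dobrushin[where A=A and m="\<lambda>_. 1 / real CARD('y)" and c=0 and u=u and v=v and xu=xu and xv=xv])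
       (use A0 rpos u0 v0 unz vnz in auto)
  then show ?thesis by simp
qed

lemma FC:
  fixes \<kappa> :: "int \<Rightarrow> 'o::finite \<Rightarrow> 'o \<Rightarrow> bool \<Rightarrow> real"
  assumes g: "good \<kappa> c" and G0: "\<And>x. 0 \<le> G x" and G'0: "\<And>x. 0 \<le> G' x"
    and Gnz: "G ya \<noteq> 0" and G'nz: "G' yb \<noteq> 0" and H: "\<And>x. 0 < H x"
  shows "m \<le> M \<Longrightarrow> tv_dist (normalize (\<lambda>x. fwd \<kappa> G (a+1) m x * bwd \<kappa> H (a + int M) (M - m) x))
                       (normalize (\<lambda>x. fwd \<kappa> G' (a+1) m x * bwd \<kappa> H (a + int M) (M - m) x))
     \<le> (1 - c) ^ m * tv_dist (normalize (\<lambda>x. G x * bwd \<kappa> H (a + int M) M x)) (normalize (\<lambda>x. G' x * bwd \<kappa> H (a + int M) M x))"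
proof (induction m)
  case 0 then show ?case by simp
next
  case (Suc m)
  define e where "e = a + int M"
  define j where "j = M - Suc m"
  have Mm: "M - m = Suc j" using Suc.prems by (simp add: j_def)
  have tm: "e - int j = a + 1 + int m" using Suc.prems by (simp add: e_def j_def)
  define K where "K = Kk \<kappa> (a + 1 + int m)"
  define \<beta> where "\<beta> = bwd \<kappa> H e j"
  define A where "A x y = K x y * \<beta> y" for x y
  have Kp: "0 < K x y" for x y by (simp add: K_def Kk_pos[OF g])
  have \<beta>p: "0 < \<beta> y" for y by (simp add: \<beta>_def bwd_pos[OF g H])
  have rs: "(\<Sum>y\<in>UNIV. A x y) = bwd \<kappa> H e (M - m) x" for x
    by (simp add: Mm A_def K_def \<beta>_def tm)
  obtain mm where mm: "\<forall>y. 0 \<le> mm y" "(\<Sum>y\<in>UNIV. mm y) = 1"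
      "\<forall>x y. c * (\<Sum>y'\<in>UNIV. K x y' * \<beta> y') * mm y \<le> K x y * \<beta> y"
    using minor_fwd[of K c \<beta>] Kp Kk_ratio[OF g] \<beta>p good_c[OF g] by (auto simp: K_def)
  obtain xa where xa: "fwd \<kappa> G (a+1) m xa \<noteq> 0" using fwd_nz[where u=G and zz=ya, OF g G0 Gnz] by blast
  obtain xb where xb: "fwd \<kappa> G' (a+1) m xb \<noteq> 0" using fwd_nz[where u=G' and zz=yb, OF g G'0 G'nz] by blast
  have D: "tv_dist (normalize (\<lambda>y. \<Sum>x\<in>UNIV. fwd \<kappa> G (a+1) m x * A x y)) (normalize (\<lambda>y. \<Sum>x\<in>UNIV. fwd \<kappa> G' (a+1) m x * A x y))
     \<le> (1 - c) * tv_dist (normalize (\<lambda>x. fwd \<kappa> G (a+1) m x * (\<Sum>y\<in>UNIV. A x y))) (normalize (\<lambda>x. fwd \<kappa> G' (a+1) m x * (\<Sum>y\<in>UNIV. A x y)))"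
    by (rule dobrushin[where m=mm and xu=xa and xv=xb])
       (use Kp \<beta>p mm xa xb fwd_nonneg[OF g G0] fwd_nonneg[OF g G'0] in
        \<open>auto simp: A_def intro!: sum_pos mult_pos_pos less_imp_le\<close>)
  have L: "(\<lambda>y. \<Sum>x\<in>UNIV. fwd \<kappa> G0' (a+1) m x * A x y) = (\<lambda>y. fwd \<kappa> G0' (a+1) (Suc m) y * bwd \<kappa> H e (M - Suc m) y)" for G0'
    by (rule ext) (simp add: A_def K_def \<beta>_def j_def sum_distrib_right mult.assoc add.assoc)
  have c1: "0 \<le> 1 - c" using good_c1[OF g] by simp
  from D have "tv_dist (normalize (\<lambda>x. fwd \<kappa> G (a+1) (Suc m) x * bwd \<kappa> H e (M - Suc m) x))
                       (normalize (\<lambda>x. fwd \<kappa> G' (a+1) (Suc m) x * bwd \<kappa> H e (M - Suc m) x))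
     \<le> (1 - c) * tv_dist (normalize (\<lambda>x. fwd \<kappa> G (a+1) m x * bwd \<kappa> H e (M - m) x)) (normalize (\<lambda>x. fwd \<kappa> G' (a+1) m x * bwd \<kappa> H e (M - m) x))"
    unfolding L rs .
  also have "\<dots> \<le> (1 - c) * ((1 - c) ^ m * tv_dist (normalize (\<lambda>x. G x * bwd \<kappa> H e M x)) (normalize (\<lambda>x. G' x * bwd \<kappa> H e M x)))"
    using Suc.IH Suc.prems c1 by (intro mult_left_mono) (auto simp: e_def)
  finally show ?case by (simp add: e_def mult.assoc)
qed

lemma BC:
  fixes \<kappa> :: "int \<Rightarrow> 'o::finite \<Rightarrow> 'o \<Rightarrow> bool \<Rightarrow> real"
  assumes g: "good \<kappa> c" and F0: "\<And>x. 0 \<le> F x" and Fnz: "F ya \<noteq> 0"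
    and H: "\<And>x. 0 < H x" and H': "\<And>x. 0 < H' x"
  shows "m \<le> M \<Longrightarrow> tv_dist (normalize (\<lambda>x. fwd \<kappa> F (a+1) m x * bwd \<kappa> H (a + int M) (M - m) x))
                       (normalize (\<lambda>x. fwd \<kappa> F (a+1) m x * bwd \<kappa> H' (a + int M) (M - m) x))
     \<le> (1 - c) ^ (M - m) * tv_dist (normalize (\<lambda>x. fwd \<kappa> F (a+1) M x * H x)) (normalize (\<lambda>x. fwd \<kappa> F (a+1) M x * H' x))"
proof (induction "M - m" arbitrary: m)
  case 0
  then have "m = M" by simp
  then show ?case by simp
next
  case (Suc d)
  define e where "e = a + int M"
  define j where "j = M - Suc m"
  have Mm: "M - m = Suc j" using Suc.hyps by (simp add: j_def)
  have tm: "e - int j = a + 1 + int m" using Suc.hyps by (simp add: e_def j_def)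
  have ms: "Suc m \<le> M" using Suc.hyps by simp
  have dj: "d = M - Suc m" using Suc.hyps by simp
  define K where "K = Kk \<kappa> (a + 1 + int m)"
  define \<phi> where "\<phi> = fwd \<kappa> F (a+1) m"
  define A where "A y x = \<phi> x * K x y" for x y
  have Kp: "0 < K x y" for x y by (simp add: K_def Kk_pos[OF g])
  have \<phi>0: "0 \<le> \<phi> x" for x by (simp add: \<phi>_def fwd_nonneg[OF g F0])
  obtain xa where xa: "\<phi> xa \<noteq> 0" using fwd_nz[where u=F and zz=ya, OF g F0 Fnz] \<phi>_def by blast
  have rs: "(\<Sum>x\<in>UNIV. A y x) = fwd \<kappa> F (a+1) (Suc m) y" for y
    by (simp add: A_def K_def \<phi>_def add.assoc)
  have rsp: "0 < (\<Sum>x\<in>UNIV. A y x)" for y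
  proof -
    have "0 < \<phi> xa * K xa y" using \<phi>0[of xa] xa Kp[of xa y] by (simp add: order_le_less mult_pos_pos)
    also have "\<dots> \<le> (\<Sum>x\<in>UNIV. A y x)" unfolding A_def
      by (rule member_le_sum) (use \<phi>0 Kp in \<open>auto intro!: mult_nonneg_nonneg intro: less_imp_le\<close>)
    finally show ?thesis .
  qed
  obtain mm where mm: "\<forall>x. 0 \<le> mm x" "(\<Sum>x\<in>UNIV. mm x) = 1"
      "\<forall>y x. c * (\<Sum>x'\<in>UNIV. \<phi> x' * K x' y) * mm x \<le> \<phi> x * K x y"
    using minor_bwd[of c K \<phi> xa] Kk_ratio[OF g] \<phi>0 xa by (auto simp: K_def)
  have bH: "0 < bwd \<kappa> H e j y" for y by (rule bwd_pos[OF g]) (rule H)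
  have bH': "0 < bwd \<kappa> H' e j y" for y by (rule bwd_pos[OF g]) (rule H')
  have D: "tv_dist (normalize (\<lambda>x. \<Sum>y\<in>UNIV. bwd \<kappa> H e j y * A y x)) (normalize (\<lambda>x. \<Sum>y\<in>UNIV. bwd \<kappa> H' e j y * A y x))
     \<le> (1 - c) * tv_dist (normalize (\<lambda>y. bwd \<kappa> H e j y * (\<Sum>x\<in>UNIV. A y x))) (normalize (\<lambda>y. bwd \<kappa> H' e j y * (\<Sum>x\<in>UNIV. A y x)))"
    by (rule dobrushin[where m=mm and xu=xa and xv=xa])
       (use Kp \<phi>0 mm rsp bH bH' less_imp_neq[OF bH[of xa]] less_imp_neq[OF bH'[of xa]] in
        \<open>auto simp: A_def intro: mult_nonneg_nonneg less_imp_le dest: less_imp_neq\<close>)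
  have L: "(\<lambda>x. \<Sum>y\<in>UNIV. bwd \<kappa> H0 e j y * A y x) = (\<lambda>x. fwd \<kappa> F (a+1) m x * bwd \<kappa> H0 e (M - m) x)" for H0
    by (rule ext) (simp add: Mm tm A_def K_def \<phi>_def sum_distrib_left mult.commute mult.left_commute)
  have R: "(\<lambda>y. bwd \<kappa> H0 e j y * (\<Sum>x\<in>UNIV. A y x)) = (\<lambda>y. fwd \<kappa> F (a+1) (Suc m) y * bwd \<kappa> H0 e (M - Suc m) y)" for H0
    by (rule ext) (simp add: rs j_def mult.commute)
  have c1: "0 \<le> 1 - c" using good_c1[OF g] by simp
  from D have "tv_dist (normalize (\<lambda>x. fwd \<kappa> F (a+1) m x * bwd \<kappa> H e (M - m) x))
                       (normalize (\<lambda>x. fwd \<kappa> F (a+1) m x * bwd \<kappa> H' e (M - m) x))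
     \<le> (1 - c) * tv_dist (normalize (\<lambda>y. fwd \<kappa> F (a+1) (Suc m) y * bwd \<kappa> H e (M - Suc m) y)) (normalize (\<lambda>y. fwd \<kappa> F (a+1) (Suc m) y * bwd \<kappa> H' e (M - Suc m) y))"
    unfolding L R .
  also have "\<dots> \<le> (1 - c) * ((1 - c) ^ d * tv_dist (normalize (\<lambda>x. fwd \<kappa> F (a+1) M x * H x)) (normalize (\<lambda>x. fwd \<kappa> F (a+1) M x * H' x)))"
    using Suc.hyps(1)[of "Suc m"] dj ms c1 by (intro mult_left_mono) (auto simp: e_def)
  finally show ?case by (simp add: e_def mult.assoc Suc.hyps(2)[symmetric])
qed

definition tgt1 :: "(int \<Rightarrow> 'o::finite \<Rightarrow> 'o \<Rightarrow> bool \<Rightarrow> real) \<Rightarrow> int \<Rightarrow> ('o \<Rightarrow> real) \<Rightarrow> ('o \<Rightarrow> real) \<Rightarrow> 'o \<times> bool \<Rightarrow> real" where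
  "tgt1 \<kappa> t Fv Bv = normalize (\<lambda>(q, b). (\<Sum>x\<in>UNIV. Fv x * \<kappa> t x q b) * Bv q)"

definition tgt2 :: "(int \<Rightarrow> 'o::finite \<Rightarrow> 'o \<Rightarrow> bool \<Rightarrow> real) \<Rightarrow> int \<Rightarrow> ('o \<Rightarrow> real) \<Rightarrow> ('o \<Rightarrow> real) \<Rightarrow> 'o \<times> bool \<Rightarrow> real" where
  "tgt2 \<kappa> t Fv Bv = normalize (\<lambda>(q, b). Fv q * (\<Sum>y\<in>UNIV. \<kappa> t q y b * Bv y))"

lemma sum_pair: "(\<Sum>y\<in>(UNIV :: ('a::finite \<times> 'b::finite) set). f y) = (\<Sum>q\<in>UNIV. \<Sum>b\<in>UNIV. f (q, b))"
  by (subst UNIV_Times_UNIV[symmetric]) (simp add: sum.cartesian_product)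

lemma sum_delta_outer:
  fixes G :: "'a::finite \<Rightarrow> 'b::finite \<Rightarrow> real"
  shows "(\<Sum>q\<in>UNIV. \<Sum>b\<in>UNIV. if x = q then G q b else 0) = (\<Sum>b\<in>UNIV. G x b)"
proof -
  have "(\<Sum>b\<in>UNIV. if x = q then G q b else 0) = (if x = q then (\<Sum>b\<in>UNIV. G q b) else 0)" for q by simp
  then show ?thesis by (simp add: sum.delta)
qed

lemma sum_pos_nz:
  fixes F :: "'x::finite \<Rightarrow> real"
  assumes "\<And>x. 0 \<le> F x" "F z \<noteq> 0" "\<And>x y. 0 < K x y" "\<And>y. 0 < \<beta> y"
  shows "0 < (\<Sum>y\<in>UNIV. \<Sum>x\<in>UNIV. F x * K x y * \<beta> (y :: 'y::finite))"
proof -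
  have "0 < (\<Sum>x\<in>UNIV. F x * (\<Sum>y\<in>UNIV. K x y * \<beta> y))"
    by (rule pos_sum_of_nonneg_nz[where zz=z]) (use assms in \<open>auto intro!: sum_pos mult_pos_pos\<close>)
  also have "\<dots> = (\<Sum>y\<in>UNIV. \<Sum>x\<in>UNIV. F x * K x y * \<beta> y)"
    by (subst sum.swap) (simp add: sum_distrib_left mult.assoc)
  finally show ?thesis .
qed

lemma perturb_sum:
  fixes a k1 k2 :: "'y::finite \<Rightarrow> 'x::finite \<Rightarrow> real"
  assumes a0: "\<And>y x. 0 \<le> a y x" and k10: "\<And>y x. 0 \<le> k1 y x" and k20: "\<And>y x. 0 \<le> k2 y x"
    and cl: "\<And>y x. \<bar>k1 y x - k2 y x\<bar> \<le> r * k1 y x"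
    and P1: "0 < (\<Sum>y\<in>UNIV. \<Sum>x\<in>UNIV. a y x * k1 y x)" and P2: "0 < (\<Sum>y\<in>UNIV. \<Sum>x\<in>UNIV. a y x * k2 y x)"
  shows "tv_dist (normalize (\<lambda>y. \<Sum>x\<in>UNIV. a y x * k1 y x)) (normalize (\<lambda>y. \<Sum>x\<in>UNIV. a y x * k2 y x)) \<le> r"
proof (rule perturb)
  fix y
  have "\<bar>(\<Sum>x\<in>UNIV. a y x * k1 y x) - (\<Sum>x\<in>UNIV. a y x * k2 y x)\<bar> = \<bar>\<Sum>x\<in>UNIV. a y x * (k1 y x - k2 y x)\<bar>"
    by (simp add: sum_subtractf right_diff_distrib)
  also have "\<dots> \<le> (\<Sum>x\<in>UNIV. \<bar>a y x * (k1 y x - k2 y x)\<bar>)" by (rule sum_abs)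
  also have "\<dots> \<le> (\<Sum>x\<in>UNIV. a y x * (r * k1 y x))"
    by (rule sum_mono) (use a0 cl in \<open>auto simp: abs_mult intro: mult_left_mono\<close>)
  also have "\<dots> = r * (\<Sum>x\<in>UNIV. a y x * k1 y x)" by (simp add: sum_distrib_left algebra_simps)
  finally show "\<bar>(\<Sum>x\<in>UNIV. a y x * k1 y x) - (\<Sum>x\<in>UNIV. a y x * k2 y x)\<bar> \<le> r * (\<Sum>x\<in>UNIV. a y x * k1 y x)" .
qed (use a0 k10 k20 P1 P2 in \<open>auto intro!: sum_nonneg mult_nonneg_nonneg\<close>)

lemma T1F:
  fixes \<kappa> :: "int \<Rightarrow> 'o::finite \<Rightarrow> 'o \<Rightarrow> bool \<Rightarrow> real"
  assumes g: "good \<kappa> c" and F0: "\<And>x. 0 \<le> F x" and F'0: "\<And>x. 0 \<le> F' x" and Fnz: "F ya \<noteq> 0" and F'nz: "F' yb \<noteq> 0"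
    and Bp: "\<And>y. 0 < Bv y"
  shows "tv_dist (tgt1 \<kappa> t F Bv) (tgt1 \<kappa> t F' Bv)
    \<le> (1 - c) * tv_dist (normalize (\<lambda>x. F x * (\<Sum>y\<in>UNIV. Kk \<kappa> t x y * Bv y))) (normalize (\<lambda>x. F' x * (\<Sum>y\<in>UNIV. Kk \<kappa> t x y * Bv y)))"
proof -
  define K where "K x (qb :: 'o \<times> bool) = \<kappa> t x (fst qb) (snd qb)" for x qb
  define \<beta> where "\<beta> (qb :: 'o \<times> bool) = Bv (fst qb)" for qb
  define A where "A x qb = K x qb * \<beta> qb" for x qb
  have Kp: "0 < K x y" for x y by (simp add: K_def good_pos[OF g])
  have \<beta>p: "0 < \<beta> y" for y by (simp add: \<beta>_def Bp)
  have rs: "(\<Sum>y\<in>UNIV. A x y) = (\<Sum>y\<in>UNIV. Kk \<kappa> t x y * Bv y)" for x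
    by (simp add: sum_pair A_def K_def \<beta>_def Kk_def sum_distrib_right)
  obtain mm where mm: "\<forall>y. 0 \<le> mm y" "(\<Sum>y\<in>UNIV. mm y) = 1"
      "\<forall>x y. c * (\<Sum>y'\<in>UNIV. K x y' * \<beta> y') * mm y \<le> K x y * \<beta> y"
    using minor_fwd[of K c \<beta>] Kp good_ratio[OF g] \<beta>p good_c[OF g] by (auto simp: K_def)
  have D: "tv_dist (normalize (\<lambda>y. \<Sum>x\<in>UNIV. F x * A x y)) (normalize (\<lambda>y. \<Sum>x\<in>UNIV. F' x * A x y))
     \<le> (1 - c) * tv_dist (normalize (\<lambda>x. F x * (\<Sum>y\<in>UNIV. A x y))) (normalize (\<lambda>x. F' x * (\<Sum>y\<in>UNIV. A x y)))"
    by (rule dobrushin[where m=mm and xu=ya and xv=yb])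
       (use Kp \<beta>p mm Fnz F'nz F0 F'0 in \<open>auto simp: A_def intro!: sum_pos mult_pos_pos intro: less_imp_le\<close>)
  have L: "(\<lambda>y. \<Sum>x\<in>UNIV. G x * A x y) = (\<lambda>(q, b). (\<Sum>x\<in>UNIV. G x * \<kappa> t x q b) * Bv q)" for G
    by (rule ext) (auto simp: A_def K_def \<beta>_def sum_distrib_right mult.assoc split: prod.split)
  show ?thesis using D unfolding L rs tgt1_def .
qed

lemma T2F:
  fixes \<kappa> :: "int \<Rightarrow> 'o::finite \<Rightarrow> 'o \<Rightarrow> bool \<Rightarrow> real"
  assumes g: "good \<kappa> c" and F0: "\<And>x. 0 \<le> F x" and F'0: "\<And>x. 0 \<le> F' x" and Fnz: "F ya \<noteq> 0" and F'nz: "F' yb \<noteq> 0"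
    and Bp: "\<And>y. 0 < Bv y"
  shows "tv_dist (tgt2 \<kappa> t F Bv) (tgt2 \<kappa> t F' Bv)
    \<le> tv_dist (normalize (\<lambda>x. F x * (\<Sum>y\<in>UNIV. Kk \<kappa> t x y * Bv y))) (normalize (\<lambda>x. F' x * (\<Sum>y\<in>UNIV. Kk \<kappa> t x y * Bv y)))"
proof -
  define A where "A x (qb :: 'o \<times> bool) = (if x = fst qb then (\<Sum>y\<in>UNIV. \<kappa> t x y (snd qb) * Bv y) else 0)" for x qb
  have A0: "0 \<le> A x y" for x y
    using good_pos[OF g] Bp by (auto simp: A_def intro!: sum_nonneg mult_nonneg_nonneg intro: less_imp_le)
  have rs: "(\<Sum>y\<in>UNIV. A x y) = (\<Sum>y\<in>UNIV. Kk \<kappa> t x y * Bv y)" for x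
  proof -
    have "(\<Sum>y\<in>UNIV. A x y) = (\<Sum>b\<in>UNIV. \<Sum>y\<in>UNIV. \<kappa> t x y b * Bv y)"
      by (simp add: sum_pair A_def sum_delta_outer)
    also have "\<dots> = (\<Sum>y\<in>UNIV. Kk \<kappa> t x y * Bv y)"
      by (subst sum.swap) (simp add: Kk_def sum_distrib_right)
    finally show ?thesis .
  qed
  have rsp: "0 < (\<Sum>y\<in>UNIV. A x y)" for x
    unfolding rs by (rule sum_pos) (auto intro: mult_pos_pos Kk_pos[OF g] Bp)
  have D: "tv_dist (normalize (\<lambda>y. \<Sum>x\<in>UNIV. F x * A x y)) (normalize (\<lambda>y. \<Sum>x\<in>UNIV. F' x * A x y))
     \<le> tv_dist (normalize (\<lambda>x. F x * (\<Sum>y\<in>UNIV. A x y))) (normalize (\<lambda>x. F' x * (\<Sum>y\<in>UNIV. A x y)))"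
    by (rule dobrushin0[where xu=ya and xv=yb]) (use A0 rsp Fnz F'nz F0 F'0 in auto)
  have L: "(\<lambda>y. \<Sum>x\<in>UNIV. G x * A x y) = (\<lambda>(q, b). G q * (\<Sum>y\<in>UNIV. \<kappa> t q y b * Bv y))" for G
    by (rule ext) (auto simp: A_def if_distrib sum.delta cong: if_cong split: prod.split)
  show ?thesis using D unfolding L rs tgt2_def .
qed

lemma T1B:
  fixes \<kappa> :: "int \<Rightarrow> 'o::finite \<Rightarrow> 'o \<Rightarrow> bool \<Rightarrow> real"
  assumes g: "good \<kappa> c" and F0: "\<And>x. 0 \<le> F x" and Fnz: "F ya \<noteq> 0"
    and Bp: "\<And>y. 0 < Bv y" and B'p: "\<And>y. 0 < Bv' y"
  shows "tv_dist (tgt1 \<kappa> t F Bv) (tgt1 \<kappa> t F Bv')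
    \<le> tv_dist (normalize (\<lambda>y. (\<Sum>x\<in>UNIV. F x * Kk \<kappa> t x y) * Bv y)) (normalize (\<lambda>y. (\<Sum>x\<in>UNIV. F x * Kk \<kappa> t x y) * Bv' y))"
proof -
  define A where "A x' (qb :: 'o \<times> bool) = (if x' = fst qb then (\<Sum>x\<in>UNIV. F x * \<kappa> t x x' (snd qb)) else 0)" for x' qb
  have A0: "0 \<le> A x y" for x y
    using good_pos[OF g] F0 by (auto simp: A_def intro!: sum_nonneg mult_nonneg_nonneg intro: less_imp_le)
  have rs: "(\<Sum>y\<in>UNIV. A x' y) = (\<Sum>x\<in>UNIV. F x * Kk \<kappa> t x x')" for x'
  proof -
    have "(\<Sum>y\<in>UNIV. A x' y) = (\<Sum>b\<in>UNIV. \<Sum>x\<in>UNIV. F x * \<kappa> t x x' b)"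
      by (simp add: sum_pair A_def sum_delta_outer)
    also have "\<dots> = (\<Sum>x\<in>UNIV. F x * Kk \<kappa> t x x')"
      by (subst sum.swap) (simp add: Kk_def sum_distrib_left)
    finally show ?thesis .
  qed
  have rsp: "0 < (\<Sum>y\<in>UNIV. A x' y)" for x'
    unfolding rs using pos_sum_of_nonneg_nz[where zz=ya and u=F and r="\<lambda>x. Kk \<kappa> t x x'"] F0 Fnz Kk_pos[OF g] by auto
  have D: "tv_dist (normalize (\<lambda>y. \<Sum>x\<in>UNIV. Bv x * A x y)) (normalize (\<lambda>y. \<Sum>x\<in>UNIV. Bv' x * A x y))
     \<le> tv_dist (normalize (\<lambda>x. Bv x * (\<Sum>y\<in>UNIV. A x y))) (normalize (\<lambda>x. Bv' x * (\<Sum>y\<in>UNIV. A x y)))"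
    by (rule dobrushin0[where xu=ya and xv=ya]) (use A0 rsp less_imp_le[OF Bp] less_imp_le[OF B'p] Bp[of ya] B'p[of ya] in auto)
  have L: "(\<lambda>y. \<Sum>x\<in>UNIV. G x * A x y) = (\<lambda>(q, b). (\<Sum>x\<in>UNIV. F x * \<kappa> t x q b) * G q)" for G
    by (rule ext) (auto simp: A_def if_distrib sum.delta mult.commute cong: if_cong split: prod.split)
  have R: "(\<lambda>x. G x * (\<Sum>y\<in>UNIV. A x y)) = (\<lambda>y. (\<Sum>x\<in>UNIV. F x * Kk \<kappa> t x y) * G y)" for G
    by (rule ext) (simp add: rs mult.commute)
  show ?thesis using D unfolding L R tgt1_def .
qed

lemma T2B:
  fixes \<kappa> :: "int \<Rightarrow> 'o::finite \<Rightarrow> 'o \<Rightarrow> bool \<Rightarrow> real"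
  assumes g: "good \<kappa> c" and F0: "\<And>x. 0 \<le> F x" and Fnz: "F ya \<noteq> 0"
    and Bp: "\<And>y. 0 < Bv y" and B'p: "\<And>y. 0 < Bv' y"
  shows "tv_dist (tgt2 \<kappa> t F Bv) (tgt2 \<kappa> t F Bv')
    \<le> tv_dist (normalize (\<lambda>y. (\<Sum>x\<in>UNIV. F x * Kk \<kappa> t x y) * Bv y)) (normalize (\<lambda>y. (\<Sum>x\<in>UNIV. F x * Kk \<kappa> t x y) * Bv' y))"
proof -
  define A where "A x' (qb :: 'o \<times> bool) = F (fst qb) * \<kappa> t (fst qb) x' (snd qb)" for x' qb
  have A0: "0 \<le> A x y" for x y
    using good_pos[OF g] F0 by (auto simp: A_def intro!: mult_nonneg_nonneg intro: less_imp_le)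
  have rs: "(\<Sum>y\<in>UNIV. A x' y) = (\<Sum>x\<in>UNIV. F x * Kk \<kappa> t x x')" for x'
    by (simp add: sum_pair A_def Kk_def sum_distrib_left)
  have rsp: "0 < (\<Sum>y\<in>UNIV. A x' y)" for x'
    unfolding rs using pos_sum_of_nonneg_nz[where zz=ya and u=F and r="\<lambda>x. Kk \<kappa> t x x'"] F0 Fnz Kk_pos[OF g] by auto
  have D: "tv_dist (normalize (\<lambda>y. \<Sum>x\<in>UNIV. Bv x * A x y)) (normalize (\<lambda>y. \<Sum>x\<in>UNIV. Bv' x * A x y))
     \<le> tv_dist (normalize (\<lambda>x. Bv x * (\<Sum>y\<in>UNIV. A x y))) (normalize (\<lambda>x. Bv' x * (\<Sum>y\<in>UNIV. A x y)))"
    by (rule dobrushin0[where xu=ya and xv=ya]) (use A0 rsp less_imp_le[OF Bp] less_imp_le[OF B'p] Bp[of ya] B'p[of ya] in auto)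
  have L: "(\<lambda>y. \<Sum>x\<in>UNIV. G x * A x y) = (\<lambda>(q, b). F q * (\<Sum>y\<in>UNIV. \<kappa> t q y b * G y))" for G
    by (rule ext) (auto simp: A_def sum_distrib_left mult.commute mult.left_commute split: prod.split)
  have R: "(\<lambda>x. G x * (\<Sum>y\<in>UNIV. A x y)) = (\<lambda>y. (\<Sum>x\<in>UNIV. F x * Kk \<kappa> t x y) * G y)" for G
    by (rule ext) (simp add: rs mult.commute)
  show ?thesis using D unfolding L R tgt2_def .
qed

context
  fixes \<kappa>1 \<kappa>2 :: "int \<Rightarrow> 'o::finite \<Rightarrow> 'o \<Rightarrow> bool \<Rightarrow> real" and c r :: real and u w :: "'o \<Rightarrow> real"
    and N i :: nat and z :: 'o
  assumes g1: "good \<kappa>1 c" and g2: "good \<kappa>2 c"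
    and same: "\<And>s. s \<noteq> int i \<Longrightarrow> \<kappa>1 s = \<kappa>2 s"
    and i1: "1 \<le> i" and iN: "i \<le> N"
    and cl: "\<And>x y e. \<bar>\<kappa>1 (int i) x y e - \<kappa>2 (int i) x y e\<bar> \<le> r * \<kappa>1 (int i) x y e"
    and u0: "\<And>x. 0 \<le> u x" and unz: "u z \<noteq> 0" and wp: "\<And>x. 0 < w x"
begin

lemma Kcl: "\<bar>Kk \<kappa>1 (int i) x y - Kk \<kappa>2 (int i) x y\<bar> \<le> r * Kk \<kappa>1 (int i) x y"
proof -
  have "\<bar>Kk \<kappa>1 (int i) x y - Kk \<kappa>2 (int i) x y\<bar> = \<bar>\<Sum>e\<in>UNIV. \<kappa>1 (int i) x y e - \<kappa>2 (int i) x y e\<bar>"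
    by (simp add: Kk_def sum_subtractf)
  also have "\<dots> \<le> (\<Sum>e\<in>UNIV. \<bar>\<kappa>1 (int i) x y e - \<kappa>2 (int i) x y e\<bar>)" by (rule sum_abs)
  also have "\<dots> \<le> (\<Sum>e\<in>UNIV. r * \<kappa>1 (int i) x y e)" by (rule sum_mono) (rule cl)
  finally show ?thesis by (simp add: Kk_def sum_distrib_left)
qed

lemma fwd_before: "n \<le> i - 1 \<Longrightarrow> fwd \<kappa>2 u 1 n = fwd \<kappa>1 u 1 n"
  by (rule fwd_cong) (use same in \<open>auto\<close>)

lemma bwd_after: assumes "N - n \<ge> i" shows "bwd \<kappa>2 w (int N) n = bwd \<kappa>1 w (int N) n"
proof (rule bwd_cong)
  fix s assume a: "int N - int n < s" "s \<le> int N"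
  have "n \<le> N" using assms i1 by arith
  then have "int (N - n) = int N - int n" by simp
  moreover have "int i \<le> int (N - n)" using assms by simp
  ultimately have "s \<noteq> int i" using a by linarith
  then show "\<kappa>2 s = \<kappa>1 s" using same[of s] by simp
qed

lemma PF:
  assumes it: "i < t" and tN: "t \<le> N"
  shows "tv_dist (normalize (\<lambda>x. fwd \<kappa>1 u 1 (t - 1) x * bwd \<kappa>2 w (int N) (N - t + 1) x))
                 (normalize (\<lambda>x. fwd \<kappa>2 u 1 (t - 1) x * bwd \<kappa>2 w (int N) (N - t + 1) x))
     \<le> r * (1 - c) ^ (t - 1 - i)"
proof -
  define G1 where "G1 = fwd \<kappa>1 u 1 i"
  define G2 where "G2 = fwd \<kappa>2 u 1 i"
  have split: "fwd \<kappa> u 1 (t - 1) = fwd \<kappa>2 (fwd \<kappa> u 1 i) (int i + 1) (t - 1 - i)"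
    if "\<kappa> = \<kappa>1 \<or> \<kappa> = \<kappa>2" for \<kappa>
  proof -
    have "fwd \<kappa> u 1 (t - 1) = fwd \<kappa> u 1 (i + (t - 1 - i))" using it by simp
    also have "\<dots> = fwd \<kappa> (fwd \<kappa> u 1 i) (1 + int i) (t - 1 - i)" by (rule fwd_add)
    also have "\<dots> = fwd \<kappa>2 (fwd \<kappa> u 1 i) (int i + 1) (t - 1 - i)"
      by (simp add: add.commute) (rule fwd_cong, use same that in auto)
    finally show ?thesis .
  qed
  obtain z1 where z1: "G1 z1 \<noteq> 0" using fwd_nz[where u=u and zz=z, OF g1 u0 unz] G1_def by blast
  obtain z2 where z2: "G2 z2 \<noteq> 0" using fwd_nz[where u=u and zz=z, OF g2 u0 unz] G2_def by blast
  have FCi: "tv_dist (normalize (\<lambda>x. fwd \<kappa>2 G1 (int i + 1) (t - 1 - i) x * bwd \<kappa>2 w (int i + int (N - i)) (N - i - (t - 1 - i)) x))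
                     (normalize (\<lambda>x. fwd \<kappa>2 G2 (int i + 1) (t - 1 - i) x * bwd \<kappa>2 w (int i + int (N - i)) (N - i - (t - 1 - i)) x))
     \<le> (1 - c) ^ (t - 1 - i) * tv_dist (normalize (\<lambda>x. G1 x * bwd \<kappa>2 w (int i + int (N - i)) (N - i) x)) (normalize (\<lambda>x. G2 x * bwd \<kappa>2 w (int i + int (N - i)) (N - i) x))"
    by (rule FC[where G=G1 and G'=G2 and ya=z1 and yb=z2, OF g2 _ _ z1 z2 wp]) (use it tN in \<open>auto simp: G1_def G2_def intro: fwd_nonneg[OF g1 u0] fwd_nonneg[OF g2 u0]\<close>)
  have e1: "int i + int (N - i) = int N" using iN by simp
  have e2: "N - i - (t - 1 - i) = N - t + 1" using it tN by simp
  define F where "F = fwd \<kappa>1 u 1 (i - 1)"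
  define \<beta> where "\<beta> = bwd \<kappa>2 w (int N) (N - i)"
  have Gs: "fwd \<kappa> u 1 i = (\<lambda>y. \<Sum>x\<in>UNIV. F x * Kk \<kappa> (int i) x y)" if "\<kappa> = \<kappa>1 \<or> \<kappa> = \<kappa>2" for \<kappa>
  proof -
    have "fwd \<kappa> u 1 i = (\<lambda>y. \<Sum>x\<in>UNIV. fwd \<kappa> u 1 (i - 1) x * Kk \<kappa> (int i) x y)"
      using i1 fwd_last[of i \<kappa> u 1] by simp
    also have "fwd \<kappa> u 1 (i - 1) = F" using that fwd_before[of "i - 1"] by (auto simp: F_def)
    finally show ?thesis .
  qed
  have \<beta>p: "0 < \<beta> y" for y unfolding \<beta>_def by (rule bwd_pos[OF g2]) (rule wp)
  have F0: "0 \<le> F x" for x unfolding F_def by (rule fwd_nonneg[OF g1 u0])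
  obtain z3 where z3: "F z3 \<noteq> 0" using fwd_nz[where u=u and zz=z, OF g1 u0 unz] F_def by blast
  have P: "tv_dist (normalize (\<lambda>x. G1 x * \<beta> x)) (normalize (\<lambda>x. G2 x * \<beta> x)) \<le> r"
  proof -
    have eq: "(\<lambda>y. G y * \<beta> y) = (\<lambda>y. \<Sum>x\<in>UNIV. (F x * \<beta> y) * Kk \<kappa> (int i) x y)"
      if "G = fwd \<kappa> u 1 i" "\<kappa> = \<kappa>1 \<or> \<kappa> = \<kappa>2" for G \<kappa>
      by (rule ext) (simp add: that Gs sum_distrib_left sum_distrib_right ac_simps)
    have pos: "0 < (\<Sum>y\<in>UNIV. \<Sum>x\<in>UNIV. (F x * \<beta> y) * Kk \<kappa> (int i) x y)" if "good \<kappa> c" for \<kappa>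
    proof -
      have "0 < (\<Sum>y\<in>UNIV. \<Sum>x\<in>UNIV. F x * Kk \<kappa> (int i) x y * \<beta> y)"
        by (rule sum_pos_nz[where z=z3]) (use F0 z3 Kk_pos[OF that] \<beta>p in auto)
      then show ?thesis by (simp add: ac_simps)
    qed
    show ?thesis
      unfolding eq[OF G1_def disjI1[OF refl]] eq[OF G2_def disjI2[OF refl]]
      by (rule perturb_sum) (use F0 \<beta>p Kk_pos[OF g1] Kk_pos[OF g2] Kcl pos[OF g1] pos[OF g2] in \<open>auto intro: mult_nonneg_nonneg less_imp_le\<close>)
  qed
  have c1: "0 \<le> (1 - c) ^ (t - 1 - i)" using good_c1[OF g1] by simp
  have "tv_dist (normalize (\<lambda>x. fwd \<kappa>1 u 1 (t - 1) x * bwd \<kappa>2 w (int N) (N - t + 1) x))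
                 (normalize (\<lambda>x. fwd \<kappa>2 u 1 (t - 1) x * bwd \<kappa>2 w (int N) (N - t + 1) x))
     \<le> (1 - c) ^ (t - 1 - i) * tv_dist (normalize (\<lambda>x. G1 x * \<beta> x)) (normalize (\<lambda>x. G2 x * \<beta> x))"
    using FCi unfolding e1 e2 split[OF disjI1[OF refl]] split[OF disjI2[OF refl]] G1_def G2_def \<beta>_def .
  also have "\<dots> \<le> (1 - c) ^ (t - 1 - i) * r" using P c1 by (rule mult_left_mono)
  finally show ?thesis by (simp add: mult.commute)
qed


lemma PB:
  assumes ti: "t < i"
  shows "tv_dist (normalize (\<lambda>x. fwd \<kappa>1 u 1 t x * bwd \<kappa>1 w (int N) (N - t) x))
                 (normalize (\<lambda>x. fwd \<kappa>1 u 1 t x * bwd \<kappa>2 w (int N) (N - t) x))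
     \<le> r * (1 - c) ^ (i - 1 - t)"
proof -
  define H1 where "H1 = bwd \<kappa>1 w (int N) (N - i + 1)"
  define H2 where "H2 = bwd \<kappa>2 w (int N) (N - i + 1)"
  have split: "bwd \<kappa> w (int N) (N - t) = bwd \<kappa>1 (bwd \<kappa> w (int N) (N - i + 1)) (0 + int (i - 1)) (i - 1 - t)"
    if "\<kappa> = \<kappa>1 \<or> \<kappa> = \<kappa>2" for \<kappa>
  proof -
    have "N - t = (N - i + 1) + (i - 1 - t)" using ti iN by simp
    then have "bwd \<kappa> w (int N) (N - t) = bwd \<kappa> w (int N) ((N - i + 1) + (i - 1 - t))" by (rule arg_cong)
    also have "\<dots> = bwd \<kappa> (bwd \<kappa> w (int N) (N - i + 1)) (int N - int (N - i + 1)) (i - 1 - t)" by (rule bwd_add)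
    also have "int N - int (N - i + 1) = 0 + int (i - 1)" using i1 iN by simp
    also have "bwd \<kappa> (bwd \<kappa> w (int N) (N - i + 1)) (0 + int (i - 1)) (i - 1 - t)
             = bwd \<kappa>1 (bwd \<kappa> w (int N) (N - i + 1)) (0 + int (i - 1)) (i - 1 - t)"
      by (rule bwd_cong) (use same that i1 in auto)
    finally show ?thesis .
  qed
  have H1p: "0 < H1 x" for x unfolding H1_def by (rule bwd_pos[OF g1]) (rule wp)
  have H2p: "0 < H2 x" for x unfolding H2_def by (rule bwd_pos[OF g2]) (rule wp)
  have BCi: "tv_dist (normalize (\<lambda>x. fwd \<kappa>1 u (0+1) t x * bwd \<kappa>1 H1 (0 + int (i - 1)) (i - 1 - t) x))
                     (normalize (\<lambda>x. fwd \<kappa>1 u (0+1) t x * bwd \<kappa>1 H2 (0 + int (i - 1)) (i - 1 - t) x))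
     \<le> (1 - c) ^ (i - 1 - t) * tv_dist (normalize (\<lambda>x. fwd \<kappa>1 u (0+1) (i - 1) x * H1 x)) (normalize (\<lambda>x. fwd \<kappa>1 u (0+1) (i - 1) x * H2 x))"
    by (rule BC[where F=u and ya=z and H=H1 and H'=H2, OF g1 u0 unz H1p H2p]) (use ti in simp)
  define F where "F = fwd \<kappa>1 u 1 (i - 1)"
  define \<beta> where "\<beta> = bwd \<kappa>1 w (int N) (N - i)"
  have Hs: "bwd \<kappa> w (int N) (N - i + 1) = (\<lambda>x. \<Sum>y\<in>UNIV. Kk \<kappa> (int i) x y * \<beta> y)" if "\<kappa> = \<kappa>1 \<or> \<kappa> = \<kappa>2" for \<kappa>
  proof -
    have "bwd \<kappa> w (int N) (N - i + 1) = (\<lambda>x. \<Sum>y\<in>UNIV. Kk \<kappa> (int N - int (N - i + 1) + 1) x y * bwd \<kappa> w (int N) (N - i) y)"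
      using bwd_last[of "N - i + 1" \<kappa> w "int N"] by simp
    also have "int N - int (N - i + 1) + 1 = int i" using iN by simp
    also have "bwd \<kappa> w (int N) (N - i) = \<beta>" using that bwd_after[of "N - i"] iN by (auto simp: \<beta>_def)
    finally show ?thesis .
  qed
  have \<beta>p: "0 < \<beta> y" for y unfolding \<beta>_def by (rule bwd_pos[OF g1]) (rule wp)
  have F0: "0 \<le> F x" for x unfolding F_def by (rule fwd_nonneg[OF g1 u0])
  obtain z3 where z3: "F z3 \<noteq> 0" using fwd_nz[where u=u and zz=z, OF g1 u0 unz] F_def by blast
  have P: "tv_dist (normalize (\<lambda>x. F x * H1 x)) (normalize (\<lambda>x. F x * H2 x)) \<le> r"
  proof -
    have eq: "(\<lambda>x. F x * H x) = (\<lambda>x. \<Sum>y\<in>UNIV. (F x * \<beta> y) * Kk \<kappa> (int i) x y)"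
      if "H = bwd \<kappa> w (int N) (N - i + 1)" "\<kappa> = \<kappa>1 \<or> \<kappa> = \<kappa>2" for H \<kappa>
      unfolding that(1) Hs[OF that(2)] by (rule ext) (simp add: sum_distrib_left ac_simps)
    have pos: "0 < (\<Sum>x\<in>UNIV. \<Sum>y\<in>UNIV. (F x * \<beta> y) * Kk \<kappa> (int i) x y)" if "good \<kappa> c" for \<kappa>
    proof -
      have "0 < (\<Sum>y\<in>UNIV. \<Sum>x\<in>UNIV. F x * Kk \<kappa> (int i) x y * \<beta> y)"
        by (rule sum_pos_nz[where z=z3]) (use F0 z3 Kk_pos[OF that] \<beta>p in auto)
      then show ?thesis by (subst sum.swap) (simp add: ac_simps)
    qed
    show ?thesis
      unfolding eq[OF H1_def disjI1[OF refl]] eq[OF H2_def disjI2[OF refl]]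
      by (rule perturb_sum) (use F0 \<beta>p Kk_pos[OF g1] Kk_pos[OF g2] Kcl pos[OF g1] pos[OF g2] in \<open>auto intro: mult_nonneg_nonneg less_imp_le\<close>)
  qed
  have c1: "0 \<le> (1 - c) ^ (i - 1 - t)" using good_c1[OF g1] by simp
  have "tv_dist (normalize (\<lambda>x. fwd \<kappa>1 u 1 t x * bwd \<kappa>1 w (int N) (N - t) x))
                 (normalize (\<lambda>x. fwd \<kappa>1 u 1 t x * bwd \<kappa>2 w (int N) (N - t) x))
     \<le> (1 - c) ^ (i - 1 - t) * tv_dist (normalize (\<lambda>x. F x * H1 x)) (normalize (\<lambda>x. F x * H2 x))"
    using BCi unfolding split[OF disjI1[OF refl]] split[OF disjI2[OF refl]] H1_def H2_def F_def by simp
  also have "\<dots> \<le> (1 - c) ^ (i - 1 - t) * r" using P c1 by (rule mult_left_mono)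
  finally show ?thesis by (simp add: mult.commute)
qed



lemma SC:
  assumes t1: "1 \<le> t" and tN: "t \<le> N"
  shows "tv_dist (tgt1 \<kappa>1 (int t) (fwd \<kappa>1 u 1 (t - 1)) (bwd \<kappa>1 w (int N) (N - t)))
                 (tgt1 \<kappa>2 (int t) (fwd \<kappa>2 u 1 (t - 1)) (bwd \<kappa>2 w (int N) (N - t)))
         \<le> r * (if i \<le> t then (1 - c) ^ (t - i) else (1 - c) ^ (i - 1 - t))"
    and "tv_dist (tgt2 \<kappa>1 (int t) (fwd \<kappa>1 u 1 (t - 1)) (bwd \<kappa>1 w (int N) (N - t)))
                 (tgt2 \<kappa>2 (int t) (fwd \<kappa>2 u 1 (t - 1)) (bwd \<kappa>2 w (int N) (N - t)))
         \<le> r * (if i < t then (1 - c) ^ (t - 1 - i) else if i = t then 1 else (1 - c) ^ (i - 1 - t))"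
proof -
  define F1 where "F1 = fwd \<kappa>1 u 1 (t - 1)"
  define F2 where "F2 = fwd \<kappa>2 u 1 (t - 1)"
  define B1 where "B1 = bwd \<kappa>1 w (int N) (N - t)"
  define B2 where "B2 = bwd \<kappa>2 w (int N) (N - t)"
  have F10: "0 \<le> F1 x" for x unfolding F1_def by (rule fwd_nonneg[OF g1 u0])
  have F20: "0 \<le> F2 x" for x unfolding F2_def by (rule fwd_nonneg[OF g2 u0])
  obtain z1 where z1: "F1 z1 \<noteq> 0" using fwd_nz[where u=u and zz=z, OF g1 u0 unz] F1_def by blast
  obtain z2 where z2: "F2 z2 \<noteq> 0" using fwd_nz[where u=u and zz=z, OF g2 u0 unz] F2_def by blast
  have B1p: "0 < B1 x" for x unfolding B1_def by (rule bwd_pos[OF g1]) (rule wp)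
  have B2p: "0 < B2 x" for x unfolding B2_def by (rule bwd_pos[OF g2]) (rule wp)
  have c0: "0 \<le> 1 - c" using good_c1[OF g1] by simp
  consider (lt) "i < t" | (eq) "i = t" | (gt) "t < i" by linarith
  then have "tv_dist (tgt1 \<kappa>1 (int t) F1 B1) (tgt1 \<kappa>2 (int t) F2 B2)
         \<le> r * (if i \<le> t then (1 - c) ^ (t - i) else (1 - c) ^ (i - 1 - t))
    \<and> tv_dist (tgt2 \<kappa>1 (int t) F1 B1) (tgt2 \<kappa>2 (int t) F2 B2)
         \<le> r * (if i < t then (1 - c) ^ (t - 1 - i) else if i = t then 1 else (1 - c) ^ (i - 1 - t))"
  proof cases
    case lt
    have BB: "B1 = B2" unfolding B1_def B2_def using bwd_after[of "N - t"] lt tN by simp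
    have kk: "\<kappa>1 (int t) = \<kappa>2 (int t)" using same lt by simp
    have Bs: "(\<lambda>x. F x * (\<Sum>y\<in>UNIV. Kk \<kappa>2 (int t) x y * B2 y)) = (\<lambda>x. F x * bwd \<kappa>2 w (int N) (N - t + 1) x)" for F
    proof -
      have "bwd \<kappa>2 w (int N) (N - t + 1) = (\<lambda>x. \<Sum>y\<in>UNIV. Kk \<kappa>2 (int N - int (N - t + 1) + 1) x y * bwd \<kappa>2 w (int N) (N - t) y)"
        using bwd_last[of "N - t + 1" \<kappa>2 w "int N"] by simp
      also have "int N - int (N - t + 1) + 1 = int t" using tN by simp
      finally show ?thesis by (simp add: B2_def)
    qed
    have PFt: "tv_dist (normalize (\<lambda>x. F1 x * bwd \<kappa>2 w (int N) (N - t + 1) x)) (normalize (\<lambda>x. F2 x * bwd \<kappa>2 w (int N) (N - t + 1) x))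
      \<le> r * (1 - c) ^ (t - 1 - i)" unfolding F1_def F2_def by (rule PF[OF lt tN])
    have A: "tv_dist (tgt1 \<kappa>1 (int t) F1 B1) (tgt1 \<kappa>2 (int t) F2 B2)
        \<le> (1 - c) * tv_dist (normalize (\<lambda>x. F1 x * bwd \<kappa>2 w (int N) (N - t + 1) x)) (normalize (\<lambda>x. F2 x * bwd \<kappa>2 w (int N) (N - t + 1) x))"
    proof -
      have eqt: "tgt1 \<kappa>1 (int t) F1 B1 = tgt1 \<kappa>2 (int t) F1 B2" by (simp add: tgt1_def kk BB)
      show ?thesis
        using T1F[where F=F1 and F'=F2 and ya=z1 and yb=z2 and t="int t" and Bv=B2, OF g2 F10 F20 z1 z2 B2p]
        unfolding Bs eqt .
    qed
    also have "\<dots> \<le> (1 - c) * (r * (1 - c) ^ (t - 1 - i))" using PFt c0 by (rule mult_left_mono)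
    also have "\<dots> = r * (1 - c) ^ (t - i)"
    proof -
      have "t - i = Suc (t - 1 - i)" using lt by simp
      then show ?thesis by (simp add: ac_simps)
    qed
    finally have 1: "tv_dist (tgt1 \<kappa>1 (int t) F1 B1) (tgt1 \<kappa>2 (int t) F2 B2) \<le> r * (1 - c) ^ (t - i)" .
    have "tv_dist (tgt2 \<kappa>1 (int t) F1 B1) (tgt2 \<kappa>2 (int t) F2 B2)
        \<le> tv_dist (normalize (\<lambda>x. F1 x * bwd \<kappa>2 w (int N) (N - t + 1) x)) (normalize (\<lambda>x. F2 x * bwd \<kappa>2 w (int N) (N - t + 1) x))"
    proof -
      have eqt: "tgt2 \<kappa>1 (int t) F1 B1 = tgt2 \<kappa>2 (int t) F1 B2" by (simp add: tgt2_def kk BB)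
      show ?thesis
        using T2F[where F=F1 and F'=F2 and ya=z1 and yb=z2 and t="int t" and Bv=B2, OF g2 F10 F20 z1 z2 B2p]
        unfolding Bs eqt .
    qed
    also note PFt
    finally show ?thesis using 1 lt by simp
  next
    case eq
    have FF: "F1 = F2" unfolding F1_def F2_def using fwd_before[of "t - 1"] eq by simp
    have BB: "B1 = B2" unfolding B1_def B2_def using bwd_after[of "N - t"] eq tN by simp
    have e1: "tgt1 \<kappa> (int t) F1 B1 = normalize (\<lambda>y. \<Sum>x\<in>UNIV. (F1 x * B1 (fst y)) * \<kappa> (int t) x (fst y) (snd y))" for \<kappa>
      unfolding tgt1_def by (intro arg_cong[where f=normalize] ext) (auto simp: sum_distrib_left sum_distrib_right ac_simps split: prod.split)
    have e2: "tgt2 \<kappa> (int t) F1 B1 = normalize (\<lambda>y. \<Sum>x\<in>UNIV. (F1 (fst y) * B1 x) * \<kappa> (int t) (fst y) x (snd y))" for \<kappa>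
      unfolding tgt2_def by (intro arg_cong[where f=normalize] ext) (auto simp: sum_distrib_left sum_distrib_right ac_simps split: prod.split)
    have pos1: "0 < (\<Sum>y\<in>UNIV. \<Sum>x\<in>UNIV. (F1 x * B1 (fst y)) * \<kappa> (int t) x (fst y) (snd y))" if "good \<kappa> c" for \<kappa>
    proof -
      have "0 < (\<Sum>y\<in>UNIV. \<Sum>x\<in>UNIV. F1 x * \<kappa> (int t) x (fst y) (snd y) * B1 (fst y))"
        by (rule sum_pos_nz[where z=z1]) (use F10 z1 good_pos[OF that] B1p in auto)
      then show ?thesis by (simp add: ac_simps)
    qed
    have pos2: "0 < (\<Sum>y\<in>UNIV. \<Sum>x\<in>UNIV. (F1 (fst y) * B1 x) * \<kappa> (int t) (fst y) x (snd y))" if "good \<kappa> c" for \<kappa>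
    proof -
      have "0 < (\<Sum>q\<in>UNIV. F1 q * (\<Sum>b\<in>UNIV. \<Sum>x\<in>UNIV. \<kappa> (int t) q x b * B1 x))"
        by (rule pos_sum_of_nonneg_nz[where zz=z1]) (use F10 z1 good_pos[OF that] B1p in \<open>auto intro!: sum_pos mult_pos_pos\<close>)
      then show ?thesis by (simp add: sum_pair sum_distrib_left ac_simps)
    qed
    have "tv_dist (tgt1 \<kappa>1 (int t) F1 B1) (tgt1 \<kappa>2 (int t) F1 B1) \<le> r"
      unfolding e1
      by (rule perturb_sum) (use F10 B1p good_pos[OF g1] good_pos[OF g2] cl eq pos1[OF g1] pos1[OF g2] in \<open>auto intro: mult_nonneg_nonneg less_imp_le\<close>)
    moreover have "tv_dist (tgt2 \<kappa>1 (int t) F1 B1) (tgt2 \<kappa>2 (int t) F1 B1) \<le> r"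
      unfolding e2
      by (rule perturb_sum) (use F10 B1p good_pos[OF g1] good_pos[OF g2] cl eq pos2[OF g1] pos2[OF g2] in \<open>auto intro: mult_nonneg_nonneg less_imp_le\<close>)
    ultimately show ?thesis using eq FF BB by simp
  next
    case gt
    have FF: "F1 = F2" unfolding F1_def F2_def using fwd_before[of "t - 1"] gt by simp
    have kk: "\<kappa>1 (int t) = \<kappa>2 (int t)" using same gt by simp
    have Fs: "(\<lambda>y. (\<Sum>x\<in>UNIV. F1 x * Kk \<kappa>1 (int t) x y) * B y) = (\<lambda>y. fwd \<kappa>1 u 1 t y * B y)" for B
    proof -
      have "fwd \<kappa>1 u 1 t = (\<lambda>y. \<Sum>x\<in>UNIV. fwd \<kappa>1 u 1 (t - 1) x * Kk \<kappa>1 (1 + int t - 1) x y)"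
        using fwd_last[of t \<kappa>1 u 1] t1 by simp
      then show ?thesis by (simp add: F1_def)
    qed
    have PBt: "tv_dist (normalize (\<lambda>y. fwd \<kappa>1 u 1 t y * B1 y)) (normalize (\<lambda>y. fwd \<kappa>1 u 1 t y * B2 y))
      \<le> r * (1 - c) ^ (i - 1 - t)" unfolding B1_def B2_def by (rule PB[OF gt])
    have "tv_dist (tgt1 \<kappa>1 (int t) F1 B1) (tgt1 \<kappa>2 (int t) F2 B2) = tv_dist (tgt1 \<kappa>1 (int t) F1 B1) (tgt1 \<kappa>1 (int t) F1 B2)"
      by (simp add: FF tgt1_def kk)
    also have "\<dots> \<le> tv_dist (normalize (\<lambda>y. fwd \<kappa>1 u 1 t y * B1 y)) (normalize (\<lambda>y. fwd \<kappa>1 u 1 t y * B2 y))"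
      using T1B[where F=F1 and ya=z1 and t="int t" and Bv=B1 and Bv'=B2, OF g1 F10 z1 B1p B2p] unfolding Fs .
    also note PBt
    finally have 1: "tv_dist (tgt1 \<kappa>1 (int t) F1 B1) (tgt1 \<kappa>2 (int t) F2 B2) \<le> r * (1 - c) ^ (i - 1 - t)" .
    have "tv_dist (tgt2 \<kappa>1 (int t) F1 B1) (tgt2 \<kappa>2 (int t) F2 B2) = tv_dist (tgt2 \<kappa>1 (int t) F1 B1) (tgt2 \<kappa>1 (int t) F1 B2)"
      by (simp add: FF tgt2_def kk)
    also have "\<dots> \<le> tv_dist (normalize (\<lambda>y. fwd \<kappa>1 u 1 t y * B1 y)) (normalize (\<lambda>y. fwd \<kappa>1 u 1 t y * B2 y))"
      using T2B[where F=F1 and ya=z1 and t="int t" and Bv=B1 and Bv'=B2, OF g1 F10 z1 B1p B2p] unfolding Fs .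
    also note PBt
    finally show ?thesis using 1 gt by simp
  qed
  then show "tv_dist (tgt1 \<kappa>1 (int t) (fwd \<kappa>1 u 1 (t - 1)) (bwd \<kappa>1 w (int N) (N - t)))
                 (tgt1 \<kappa>2 (int t) (fwd \<kappa>2 u 1 (t - 1)) (bwd \<kappa>2 w (int N) (N - t)))
         \<le> r * (if i \<le> t then (1 - c) ^ (t - i) else (1 - c) ^ (i - 1 - t))"
    and "tv_dist (tgt2 \<kappa>1 (int t) (fwd \<kappa>1 u 1 (t - 1)) (bwd \<kappa>1 w (int N) (N - t)))
                 (tgt2 \<kappa>2 (int t) (fwd \<kappa>2 u 1 (t - 1)) (bwd \<kappa>2 w (int N) (N - t)))
         \<le> r * (if i < t then (1 - c) ^ (t - 1 - i) else if i = t then 1 else (1 - c) ^ (i - 1 - t))"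
    unfolding F1_def F2_def B1_def B2_def by auto
qed

end

lemma geo: fixes \<rho> :: real assumes "0 \<le> \<rho>" "\<rho> < 1" shows "(\<Sum>k<n. \<rho> ^ k) \<le> 1 / (1 - \<rho>)"
proof -
  have "\<rho> \<noteq> 1" using assms by simp
  then have "(\<Sum>k<n. \<rho> ^ k) = (1 - \<rho> ^ n) / (1 - \<rho>)" by (simp add: sum_gp_strict)
  also have "\<dots> \<le> 1 / (1 - \<rho>)" using assms by (intro divide_right_mono) auto
  finally show ?thesis .
qed

lemma sum_low: fixes \<rho> :: real assumes "t \<le> N" "0 \<le> \<rho>" "\<rho> < 1"
  shows "(\<Sum>j<N. if j < t then \<rho> ^ (t - Suc j) else 0) \<le> 1 / (1 - \<rho>)"
proof -
  have "(\<Sum>j<N. if j < t then \<rho> ^ (t - Suc j) else 0) = (\<Sum>j\<in>{..<N} \<inter> {..<t}. \<rho> ^ (t - Suc j))"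
    by (simp add: sum.inter_restrict)
  also have "{..<N} \<inter> {..<t} = {..<t}" using assms by auto
  also have "(\<Sum>j<t. \<rho> ^ (t - Suc j)) = (\<Sum>j<t. \<rho> ^ j)" by (rule sum.nat_diff_reindex)
  also have "\<dots> \<le> 1 / (1 - \<rho>)" using assms by (intro geo)
  finally show ?thesis .
qed

lemma sum_high: fixes \<rho> :: real assumes "0 \<le> \<rho>" "\<rho> < 1"
  shows "(\<Sum>j<N. if t \<le> j then \<rho> ^ (j - t) else 0) \<le> 1 / (1 - \<rho>)"
proof -
  have "(\<Sum>j<N. if t \<le> j then \<rho> ^ (j - t) else 0) = (\<Sum>j\<in>{..<N} \<inter> {t..}. \<rho> ^ (j - t))"
    by (simp add: sum.inter_restrict)
  also have "{..<N} \<inter> {t..} = {t..<N}" by auto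
  also have "(\<Sum>j\<in>{t..<N}. \<rho> ^ (j - t)) = (\<Sum>j\<in>{0..<N - t}. \<rho> ^ j)"
    by (subst sum.atLeastLessThan_shift_0) (simp add: comp_def)
  also have "\<dots> = (\<Sum>j<N - t. \<rho> ^ j)" by (simp add: atLeast0LessThan)
  also have "\<dots> \<le> 1 / (1 - \<rho>)" using assms by (intro geo)
  finally show ?thesis .
qed

lemma sum_one: "(\<Sum>j<N. if Suc j = t then (1::real) else 0) \<le> 1"
proof (cases t)
  case 0 then show ?thesis by simp
next
  case (Suc k)
  then have "(\<Sum>j<N. if Suc j = t then (1::real) else 0) = (\<Sum>j<N. if j = k then (1::real) else 0)" by simp
  also have "\<dots> \<le> 1" by (simp add: sum.delta)
  finally show ?thesis .
qed

lemma tv_telescope: "tv_dist (f 0) (f n) \<le> (\<Sum>j<n. tv_dist (f j) (f (Suc j)))"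
proof (induction n)
  case 0 then show ?case by (simp add: tv_dist_def)
next
  case (Suc n)
  have "tv_dist (f 0) (f (Suc n)) \<le> tv_dist (f 0) (f n) + tv_dist (f n) (f (Suc n))" by (rule tv_triangle)
  then show ?case using Suc by simp
qed

definition mixk :: "(int \<Rightarrow> 'o \<Rightarrow> 'o \<Rightarrow> bool \<Rightarrow> real) \<Rightarrow> (int \<Rightarrow> 'o \<Rightarrow> 'o \<Rightarrow> bool \<Rightarrow> real) \<Rightarrow> nat \<Rightarrow> int \<Rightarrow> 'o \<Rightarrow> 'o \<Rightarrow> bool \<Rightarrow> real" where
  "mixk \<kappa>A \<kappa>B j s = (if s \<le> int j then \<kappa>B s else \<kappa>A s)"

lemma good_mixk: "good \<kappa>A c \<Longrightarrow> good \<kappa>B c \<Longrightarrow> good (mixk \<kappa>A \<kappa>B j) c"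
  by (simp add: good_def mixk_def)

lemma tgt_cong:
  assumes "\<And>s. 1 \<le> s \<Longrightarrow> s \<le> int N \<Longrightarrow> \<kappa> s = \<kappa>' s" "1 \<le> t" "t \<le> N"
  shows "tgt1 \<kappa> (int t) (fwd \<kappa> u 1 (t - 1)) (bwd \<kappa> w (int N) (N - t)) = tgt1 \<kappa>' (int t) (fwd \<kappa>' u 1 (t - 1)) (bwd \<kappa>' w (int N) (N - t))"
    and "tgt2 \<kappa> (int t) (fwd \<kappa> u 1 (t - 1)) (bwd \<kappa> w (int N) (N - t)) = tgt2 \<kappa>' (int t) (fwd \<kappa>' u 1 (t - 1)) (bwd \<kappa>' w (int N) (N - t))"
proof -
  have f: "fwd \<kappa> u 1 (t - 1) = fwd \<kappa>' u 1 (t - 1)" by (rule fwd_cong) (use assms in auto)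
  have b: "bwd \<kappa> w (int N) (N - t) = bwd \<kappa>' w (int N) (N - t)" by (rule bwd_cong) (use assms in auto)
  have k: "\<kappa> (int t) = \<kappa>' (int t)" using assms by auto
  show "tgt1 \<kappa> (int t) (fwd \<kappa> u 1 (t - 1)) (bwd \<kappa> w (int N) (N - t)) = tgt1 \<kappa>' (int t) (fwd \<kappa>' u 1 (t - 1)) (bwd \<kappa>' w (int N) (N - t))"
    unfolding f b tgt1_def k by (rule refl)
  show "tgt2 \<kappa> (int t) (fwd \<kappa> u 1 (t - 1)) (bwd \<kappa> w (int N) (N - t)) = tgt2 \<kappa>' (int t) (fwd \<kappa>' u 1 (t - 1)) (bwd \<kappa>' w (int N) (N - t))"
    unfolding f b tgt2_def k by (rule refl)
qed

lemma MAIN: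
  fixes \<kappa>A \<kappa>B :: "int \<Rightarrow> 'o::finite \<Rightarrow> 'o \<Rightarrow> bool \<Rightarrow> real"
  assumes gA: "good \<kappa>A c" and gB: "good \<kappa>B c" and cpos: "0 < c"
    and cl: "\<And>s x y e. \<bar>\<kappa>A s x y e - \<kappa>B s x y e\<bar> \<le> r * \<kappa>A s x y e"
    and uA0: "\<And>x. 0 \<le> uA x" and uAnz: "uA zA \<noteq> 0" and uB0: "\<And>x. 0 \<le> uB x" and uBnz: "uB zB \<noteq> 0"
    and wAp: "\<And>x. 0 < wA x" and wBp: "\<And>x. 0 < wB x"
    and t1: "1 \<le> t" and tN: "t \<le> N"
  shows "tv_dist (tgt1 \<kappa>A (int t) (fwd \<kappa>A uA 1 (t - 1)) (bwd \<kappa>A wA (int N) (N - t)))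
                 (tgt1 \<kappa>B (int t) (fwd \<kappa>B uB 1 (t - 1)) (bwd \<kappa>B wB (int N) (N - t)))
         \<le> (1 - c) ^ (t - 1) + (1 - c) ^ (N - t) + 2 * r / c"
    and "tv_dist (tgt2 \<kappa>A (int t) (fwd \<kappa>A uA 1 (t - 1)) (bwd \<kappa>A wA (int N) (N - t)))
                 (tgt2 \<kappa>B (int t) (fwd \<kappa>B uB 1 (t - 1)) (bwd \<kappa>B wB (int N) (N - t)))
         \<le> (1 - c) ^ (t - 1) + (1 - c) ^ (N - t) + 3 * r / c"
proof -
  define \<rho> where "\<rho> = 1 - c"
  have c1: "c \<le> 1" using good_c1[OF gA] .
  have \<rho>0: "0 \<le> \<rho>" and \<rho>1: "\<rho> < 1" using c1 cpos by (simp_all add: \<rho>_def)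
  have r0: "0 \<le> r"
  proof -
    have "0 \<le> r * \<kappa>A 0 undefined undefined undefined" using cl[of 0 undefined undefined undefined] abs_ge_zero order_trans by blast
    moreover have "0 < \<kappa>A 0 undefined undefined undefined" by (rule good_pos[OF gA])
    ultimately show ?thesis by (simp add: zero_le_mult_iff)
  qed
  define FA where "FA = fwd \<kappa>A uA 1 (t - 1)"
  define FB where "FB = fwd \<kappa>A uB 1 (t - 1)"
  define BA where "BA = bwd \<kappa>A wA (int N) (N - t)"
  define BB where "BB = bwd \<kappa>A wB (int N) (N - t)"
  have FA0: "0 \<le> FA x" for x unfolding FA_def by (rule fwd_nonneg[OF gA uA0])
  have FB0: "0 \<le> FB x" for x unfolding FB_def by (rule fwd_nonneg[OF gA uB0])
  obtain za where za: "FA za \<noteq> 0" using fwd_nz[where u=uA and zz=zA, OF gA uA0 uAnz] FA_def by blast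
  obtain zb where zb: "FB zb \<noteq> 0" using fwd_nz[where u=uB and zz=zB, OF gA uB0 uBnz] FB_def by blast
  have BAp: "0 < BA x" for x unfolding BA_def by (rule bwd_pos[OF gA]) (rule wAp)
  have BBp: "0 < BB x" for x unfolding BB_def by (rule bwd_pos[OF gA]) (rule wBp)
  have Bs: "(\<lambda>x. F x * (\<Sum>y\<in>UNIV. Kk \<kappa>A (int t) x y * BA y)) = (\<lambda>x. F x * bwd \<kappa>A wA (int N) (N - t + 1) x)" for F
  proof -
    have "bwd \<kappa>A wA (int N) (N - t + 1) = (\<lambda>x. \<Sum>y\<in>UNIV. Kk \<kappa>A (int N - int (N - t + 1) + 1) x y * bwd \<kappa>A wA (int N) (N - t) y)"
      using bwd_last[of "N - t + 1" \<kappa>A wA "int N"] by simp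
    also have "int N - int (N - t + 1) + 1 = int t" using tN by simp
    finally show ?thesis by (simp add: BA_def)
  qed
  have Fs: "(\<lambda>y. (\<Sum>x\<in>UNIV. FB x * Kk \<kappa>A (int t) x y) * B y) = (\<lambda>y. fwd \<kappa>A uB 1 t y * B y)" for B
  proof -
    have "fwd \<kappa>A uB 1 t = (\<lambda>y. \<Sum>x\<in>UNIV. fwd \<kappa>A uB 1 (t - 1) x * Kk \<kappa>A (1 + int t - 1) x y)"
      using fwd_last[of t \<kappa>A uB 1] t1 by simp
    then show ?thesis by (simp add: FB_def)
  qed
  have FCi: "tv_dist (normalize (\<lambda>x. fwd \<kappa>A uA (0+1) (t - 1) x * bwd \<kappa>A wA (0 + int N) (N - (t - 1)) x))
                     (normalize (\<lambda>x. fwd \<kappa>A uB (0+1) (t - 1) x * bwd \<kappa>A wA (0 + int N) (N - (t - 1)) x))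
     \<le> (1 - c) ^ (t - 1) * tv_dist (normalize (\<lambda>x. uA x * bwd \<kappa>A wA (0 + int N) N x)) (normalize (\<lambda>x. uB x * bwd \<kappa>A wA (0 + int N) N x))"
    by (rule FC[where G=uA and G'=uB and ya=zA and yb=zB and H=wA, OF gA uA0 uB0 uAnz uBnz wAp]) (use tN in simp)
  have le1: "tv_dist (normalize (\<lambda>x. uA x * bwd \<kappa>A wA (0 + int N) N x)) (normalize (\<lambda>x. uB x * bwd \<kappa>A wA (0 + int N) N x)) \<le> 1"
    by (rule tv_normalize_le1) (use uA0 uB0 bwd_pos[OF gA, of wA] wAp in \<open>auto intro!: mult_nonneg_nonneg intro: less_imp_le\<close>)
  have ntm: "N - (t - 1) = N - t + 1" using t1 tN by simp
  have S1: "tv_dist (normalize (\<lambda>x. FA x * bwd \<kappa>A wA (int N) (N - t + 1) x)) (normalize (\<lambda>x. FB x * bwd \<kappa>A wA (int N) (N - t + 1) x))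
      \<le> \<rho> ^ (t - 1)"
  proof -
    have "(1 - c) ^ (t - 1) * tv_dist (normalize (\<lambda>x. uA x * bwd \<kappa>A wA (0 + int N) N x)) (normalize (\<lambda>x. uB x * bwd \<kappa>A wA (0 + int N) N x))
        \<le> (1 - c) ^ (t - 1) * 1" using le1 \<rho>0 by (intro mult_left_mono) (auto simp: \<rho>_def)
    with FCi show ?thesis unfolding ntm FA_def FB_def \<rho>_def by simp
  qed
  have step1a: "tv_dist (tgt1 \<kappa>A (int t) FA BA) (tgt1 \<kappa>A (int t) FB BA) \<le> \<rho> ^ (t - 1)"
  proof -
    have "tv_dist (tgt1 \<kappa>A (int t) FA BA) (tgt1 \<kappa>A (int t) FB BA)
        \<le> (1 - c) * tv_dist (normalize (\<lambda>x. FA x * bwd \<kappa>A wA (int N) (N - t + 1) x)) (normalize (\<lambda>x. FB x * bwd \<kappa>A wA (int N) (N - t + 1) x))"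
      using T1F[where F=FA and F'=FB and ya=za and yb=zb and t="int t" and Bv=BA, OF gA FA0 FB0 za zb BAp] unfolding Bs .
    also have "\<dots> \<le> 1 * \<rho> ^ (t - 1)" using S1 c1 cpos tv_nonneg by (intro mult_mono) auto
    finally show ?thesis by simp
  qed
  have step1b: "tv_dist (tgt2 \<kappa>A (int t) FA BA) (tgt2 \<kappa>A (int t) FB BA) \<le> \<rho> ^ (t - 1)"
    using T2F[where F=FA and F'=FB and ya=za and yb=zb and t="int t" and Bv=BA, OF gA FA0 FB0 za zb BAp] S1 unfolding Bs by linarith
  have BCi: "tv_dist (normalize (\<lambda>x. fwd \<kappa>A uB (0+1) t x * bwd \<kappa>A wA (0 + int N) (N - t) x))
                     (normalize (\<lambda>x. fwd \<kappa>A uB (0+1) t x * bwd \<kappa>A wB (0 + int N) (N - t) x))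
     \<le> (1 - c) ^ (N - t) * tv_dist (normalize (\<lambda>x. fwd \<kappa>A uB (0+1) N x * wA x)) (normalize (\<lambda>x. fwd \<kappa>A uB (0+1) N x * wB x))"
    by (rule BC[where F=uB and ya=zB and H=wA and H'=wB, OF gA uB0 uBnz wAp wBp]) (use tN in simp)
  have le2: "tv_dist (normalize (\<lambda>x. fwd \<kappa>A uB (0+1) N x * wA x)) (normalize (\<lambda>x. fwd \<kappa>A uB (0+1) N x * wB x)) \<le> 1"
    by (rule tv_normalize_le1) (use fwd_nonneg[OF gA uB0] wAp wBp in \<open>auto intro!: mult_nonneg_nonneg intro: less_imp_le\<close>)
  have S2: "tv_dist (normalize (\<lambda>y. fwd \<kappa>A uB 1 t y * BA y)) (normalize (\<lambda>y. fwd \<kappa>A uB 1 t y * BB y)) \<le> \<rho> ^ (N - t)"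
  proof -
    have "(1 - c) ^ (N - t) * tv_dist (normalize (\<lambda>x. fwd \<kappa>A uB (0+1) N x * wA x)) (normalize (\<lambda>x. fwd \<kappa>A uB (0+1) N x * wB x))
        \<le> (1 - c) ^ (N - t) * 1" using le2 \<rho>0 by (intro mult_left_mono) (auto simp: \<rho>_def)
    with BCi show ?thesis unfolding BA_def BB_def \<rho>_def by simp
  qed
  have step2a: "tv_dist (tgt1 \<kappa>A (int t) FB BA) (tgt1 \<kappa>A (int t) FB BB) \<le> \<rho> ^ (N - t)"
    using T1B[where F=FB and ya=zb and t="int t" and Bv=BA and Bv'=BB, OF gA FB0 zb BAp BBp] S2 unfolding Fs by linarith
  have step2b: "tv_dist (tgt2 \<kappa>A (int t) FB BA) (tgt2 \<kappa>A (int t) FB BB) \<le> \<rho> ^ (N - t)"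
    using T2B[where F=FB and ya=zb and t="int t" and Bv=BA and Bv'=BB, OF gA FB0 zb BAp BBp] S2 unfolding Fs by linarith
  define M where "M j = mixk \<kappa>A \<kappa>B j" for j
  have gM: "good (M j) c" for j unfolding M_def by (rule good_mixk[OF gA gB])
  have sameM: "s \<noteq> int (Suc j) \<Longrightarrow> M j s = M (Suc j) s" for j s by (auto simp: M_def mixk_def)
  have clM: "\<bar>M j (int (Suc j)) x y e - M (Suc j) (int (Suc j)) x y e\<bar> \<le> r * M j (int (Suc j)) x y e" for j x y e
    using cl by (simp add: M_def mixk_def)
  have M0: "M 0 s = \<kappa>A s" if "1 \<le> s" for s using that by (simp add: M_def mixk_def)
  have MN: "M N s = \<kappa>B s" if "s \<le> int N" for s using that by (simp add: M_def mixk_def)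
  define f1 where "f1 j = tgt1 (M j) (int t) (fwd (M j) uB 1 (t - 1)) (bwd (M j) wB (int N) (N - t))" for j
  define f2 where "f2 j = tgt2 (M j) (int t) (fwd (M j) uB 1 (t - 1)) (bwd (M j) wB (int N) (N - t))" for j
  have f10: "f1 0 = tgt1 \<kappa>A (int t) FB BB" unfolding f1_def FB_def BB_def by (rule tgt_cong(1)) (use M0 t1 tN in auto)
  have f20: "f2 0 = tgt2 \<kappa>A (int t) FB BB" unfolding f2_def FB_def BB_def by (rule tgt_cong(2)) (use M0 t1 tN in auto)
  have f1N: "f1 N = tgt1 \<kappa>B (int t) (fwd \<kappa>B uB 1 (t - 1)) (bwd \<kappa>B wB (int N) (N - t))" unfolding f1_def by (rule tgt_cong(1)) (use MN t1 tN in auto)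
  have f2N: "f2 N = tgt2 \<kappa>B (int t) (fwd \<kappa>B uB 1 (t - 1)) (bwd \<kappa>B wB (int N) (N - t))" unfolding f2_def by (rule tgt_cong(2)) (use MN t1 tN in auto)
  have sc: "tv_dist (f1 j) (f1 (Suc j)) \<le> r * (if Suc j \<le> t then (1 - c) ^ (t - Suc j) else (1 - c) ^ (Suc j - 1 - t))
      \<and> tv_dist (f2 j) (f2 (Suc j)) \<le> r * (if Suc j < t then (1 - c) ^ (t - 1 - Suc j) else if Suc j = t then 1 else (1 - c) ^ (Suc j - 1 - t))"
    if "j < N" for j
    using SC[where ?\<kappa>1.0="M j" and ?\<kappa>2.0="M (Suc j)" and i="Suc j" and u=uB and w=wB and z=zB and N=N and c=c and r=r,
             OF gM gM sameM _ _ clM uB0 uBnz wBp t1 tN] that unfolding f1_def f2_def by auto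
  have sum1: "(\<Sum>j<N. tv_dist (f1 j) (f1 (Suc j))) \<le> r * (2 / c)"
  proof -
    have "(\<Sum>j<N. tv_dist (f1 j) (f1 (Suc j))) \<le> (\<Sum>j<N. r * ((if j < t then \<rho> ^ (t - Suc j) else 0) + (if t \<le> j then \<rho> ^ (j - t) else 0)))"
    proof (rule sum_mono)
      fix j assume "j \<in> {..<N}"
      then have jN: "j < N" by simp
      have "(if Suc j \<le> t then (1 - c) ^ (t - Suc j) else (1 - c) ^ (Suc j - 1 - t))
          = (if j < t then \<rho> ^ (t - Suc j) else 0) + (if t \<le> j then \<rho> ^ (j - t) else 0)"
        by (auto simp: \<rho>_def)
      then show "tv_dist (f1 j) (f1 (Suc j)) \<le> r * ((if j < t then \<rho> ^ (t - Suc j) else 0) + (if t \<le> j then \<rho> ^ (j - t) else 0))"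
        using conjunct1[OF sc[OF jN]] by simp
    qed
    also have "\<dots> = r * ((\<Sum>j<N. if j < t then \<rho> ^ (t - Suc j) else 0) + (\<Sum>j<N. if t \<le> j then \<rho> ^ (j - t) else 0))"
      by (simp only: sum.distrib[symmetric] sum_distrib_left)
    also have "\<dots> \<le> r * (1 / (1 - \<rho>) + 1 / (1 - \<rho>))"
      using sum_low[OF tN \<rho>0 \<rho>1] sum_high[OF \<rho>0 \<rho>1, of t N] r0 by (intro mult_left_mono add_mono) auto
    finally show ?thesis by (simp add: \<rho>_def)
  qed
  have sum2: "(\<Sum>j<N. tv_dist (f2 j) (f2 (Suc j))) \<le> r * (3 / c)"
  proof -
    have "(\<Sum>j<N. tv_dist (f2 j) (f2 (Suc j))) \<le> (\<Sum>j<N. r * ((if j < t - 1 then \<rho> ^ (t - 1 - Suc j) else 0) + (if Suc j = t then 1 else 0) + (if t \<le> j then \<rho> ^ (j - t) else 0)))"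
    proof (rule sum_mono)
      fix j assume "j \<in> {..<N}"
      then have "j < N" by simp
      have p: "0 \<le> \<rho> ^ k" for k using \<rho>0 by simp
      have "(if Suc j < t then (1 - c) ^ (t - 1 - Suc j) else if Suc j = t then 1 else (1 - c) ^ (Suc j - 1 - t))
          \<le> (if j < t - 1 then \<rho> ^ (t - 1 - Suc j) else 0) + (if Suc j = t then 1 else 0) + (if t \<le> j then \<rho> ^ (j - t) else 0)"
        using p t1 by (auto simp: \<rho>_def)
      then show "tv_dist (f2 j) (f2 (Suc j)) \<le> r * ((if j < t - 1 then \<rho> ^ (t - 1 - Suc j) else 0) + (if Suc j = t then 1 else 0) + (if t \<le> j then \<rho> ^ (j - t) else 0))"
        using sc[OF \<open>j < N\<close>] r0 by (meson mult_left_mono order_trans)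
    qed
    also have "\<dots> = r * ((\<Sum>j<N. if j < t - 1 then \<rho> ^ (t - 1 - Suc j) else 0) + (\<Sum>j<N. if Suc j = t then (1::real) else 0) + (\<Sum>j<N. if t \<le> j then \<rho> ^ (j - t) else 0))"
      by (simp only: sum.distrib[symmetric] sum_distrib_left)
    also have "\<dots> \<le> r * (1 / (1 - \<rho>) + 1 + 1 / (1 - \<rho>))"
      using sum_low[of "t - 1" N \<rho>] tN \<rho>0 \<rho>1 sum_one[where N=N and t=t] sum_high[OF \<rho>0 \<rho>1, of t N] r0 by (intro mult_left_mono add_mono) auto
    also have "\<dots> \<le> r * (3 / c)"
    proof -
      have "1 \<le> 1 / c" using c1 cpos by simp
      then have "1 / (1 - \<rho>) + 1 + 1 / (1 - \<rho>) \<le> 3 / c" by (simp add: \<rho>_def)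
      then show ?thesis using r0 by (rule mult_left_mono)
    qed
    finally show ?thesis .
  qed
  have step3a: "tv_dist (tgt1 \<kappa>A (int t) FB BB) (tgt1 \<kappa>B (int t) (fwd \<kappa>B uB 1 (t - 1)) (bwd \<kappa>B wB (int N) (N - t))) \<le> 2 * r / c"
    using tv_telescope[of f1 N] sum1 unfolding f10 f1N by (simp add: mult.commute)
  have step3b: "tv_dist (tgt2 \<kappa>A (int t) FB BB) (tgt2 \<kappa>B (int t) (fwd \<kappa>B uB 1 (t - 1)) (bwd \<kappa>B wB (int N) (N - t))) \<le> 3 * r / c"
    using tv_telescope[of f2 N] sum2 unfolding f20 f2N by (simp add: mult.commute)
  let ?Y1 = "tgt1 \<kappa>B (int t) (fwd \<kappa>B uB 1 (t - 1)) (bwd \<kappa>B wB (int N) (N - t))"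
  let ?Y2 = "tgt2 \<kappa>B (int t) (fwd \<kappa>B uB 1 (t - 1)) (bwd \<kappa>B wB (int N) (N - t))"
  have a1: "tv_dist (tgt1 \<kappa>A (int t) FA BA) ?Y1 \<le> tv_dist (tgt1 \<kappa>A (int t) FA BA) (tgt1 \<kappa>A (int t) FB BA) + tv_dist (tgt1 \<kappa>A (int t) FB BA) ?Y1"
    by (rule tv_triangle)
  have a2: "tv_dist (tgt1 \<kappa>A (int t) FB BA) ?Y1 \<le> tv_dist (tgt1 \<kappa>A (int t) FB BA) (tgt1 \<kappa>A (int t) FB BB) + tv_dist (tgt1 \<kappa>A (int t) FB BB) ?Y1"
    by (rule tv_triangle)
  have b1: "tv_dist (tgt2 \<kappa>A (int t) FA BA) ?Y2 \<le> tv_dist (tgt2 \<kappa>A (int t) FA BA) (tgt2 \<kappa>A (int t) FB BA) + tv_dist (tgt2 \<kappa>A (int t) FB BA) ?Y2"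
    by (rule tv_triangle)
  have b2: "tv_dist (tgt2 \<kappa>A (int t) FB BA) ?Y2 \<le> tv_dist (tgt2 \<kappa>A (int t) FB BA) (tgt2 \<kappa>A (int t) FB BB) + tv_dist (tgt2 \<kappa>A (int t) FB BB) ?Y2"
    by (rule tv_triangle)
  have "tv_dist (tgt1 \<kappa>A (int t) FA BA) ?Y1 \<le> \<rho> ^ (t - 1) + \<rho> ^ (N - t) + 2 * r / c"
    using a1 a2 step1a step2a step3a by linarith
  then show "tv_dist (tgt1 \<kappa>A (int t) (fwd \<kappa>A uA 1 (t - 1)) (bwd \<kappa>A wA (int N) (N - t))) ?Y1
         \<le> (1 - c) ^ (t - 1) + (1 - c) ^ (N - t) + 2 * r / c"
    unfolding FA_def BA_def \<rho>_def .
  have "tv_dist (tgt2 \<kappa>A (int t) FA BA) ?Y2 \<le> \<rho> ^ (t - 1) + \<rho> ^ (N - t) + 3 * r / c"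
    using b1 b2 step1b step2b step3b by linarith
  then show "tv_dist (tgt2 \<kappa>A (int t) (fwd \<kappa>A uA 1 (t - 1)) (bwd \<kappa>A wA (int N) (N - t))) ?Y2
         \<le> (1 - c) ^ (t - 1) + (1 - c) ^ (N - t) + 3 * r / c"
    unfolding FA_def BA_def \<rho>_def .
qed

definition lipb :: "'p::metric_space set \<Rightarrow> ('p \<Rightarrow> real) \<Rightarrow> bool" where
  "lipb K f \<longleftrightarrow> (\<exists>L M. lipschitz_on L K f \<and> 0 \<le> M \<and> (\<forall>x\<in>K. \<bar>f x\<bar> \<le> M))"

lemma lipb_const: "lipb K (\<lambda>x. c)"
  unfolding lipb_def by (intro exI[of _ 0] exI[of _ "\<bar>c\<bar>"]) (auto intro: lipschitz_on_constant)

lemma lipb_mult: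
  assumes "lipb K f" "lipb K g" shows "lipb K (\<lambda>x. f x * g x)"
proof -
  obtain L1 M1 where 1: "lipschitz_on L1 K f" "0 \<le> M1" "\<forall>x\<in>K. \<bar>f x\<bar> \<le> M1" using assms(1) lipb_def by blast
  obtain L2 M2 where 2: "lipschitz_on L2 K g" "0 \<le> M2" "\<forall>x\<in>K. \<bar>g x\<bar> \<le> M2" using assms(2) lipb_def by blast
  have L10: "0 \<le> L1" and L20: "0 \<le> L2" using 1 2 lipschitz_on_nonneg by blast+
  have "lipschitz_on (M1 * L2 + M2 * L1) K (\<lambda>x. f x * g x)"
  proof (rule lipschitz_onI)
    fix x y assume xy: "x \<in> K" "y \<in> K"
    have df: "\<bar>f x - f y\<bar> \<le> L1 * dist x y" using lipschitz_onD[OF 1(1) xy] by (simp add: dist_real_def)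
    have dg: "\<bar>g x - g y\<bar> \<le> L2 * dist x y" using lipschitz_onD[OF 2(1) xy] by (simp add: dist_real_def)
    have "\<bar>f x * g x - f y * g y\<bar> = \<bar>f x * (g x - g y) + g y * (f x - f y)\<bar>" by (simp add: algebra_simps)
    also have "\<dots> \<le> \<bar>f x\<bar> * \<bar>g x - g y\<bar> + \<bar>g y\<bar> * \<bar>f x - f y\<bar>"
      by (metis abs_mult abs_triangle_ineq)
    also have "\<dots> \<le> M1 * (L2 * dist x y) + M2 * (L1 * dist x y)"
      using 1 2 xy df dg by (intro add_mono mult_mono) auto
    finally show "dist (f x * g x) (f y * g y) \<le> (M1 * L2 + M2 * L1) * dist x y"
      by (simp add: dist_real_def algebra_simps)
  qed (use 1 2 L10 L20 in auto)
  moreover have "\<forall>x\<in>K. \<bar>f x * g x\<bar> \<le> M1 * M2"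
    using 1 2 by (auto simp: abs_mult intro: mult_mono)
  ultimately show ?thesis unfolding lipb_def using 1 2 by (meson mult_nonneg_nonneg)
qed

lemma lipb_C1:
  fixes f :: "'p::euclidean_space \<Rightarrow> real"
  assumes "C1_on U f" "K \<subseteq> U" "compact K" "convex K"
  shows "lipb K f"
proof (cases "K = {}")
  case True then show ?thesis unfolding lipb_def by auto
next
  case False
  obtain f' where d: "\<forall>x\<in>U. (f has_derivative blinfun_apply (f' x)) (at x)" and c: "continuous_on U f'"
    using assms(1) C1_on_def by blast
  have "continuous_on K (\<lambda>x. norm (f' x))"
    by (intro continuous_on_norm continuous_on_subset[OF c assms(2)])
  then obtain x0 where x0: "x0 \<in> K" "\<forall>y\<in>K. norm (f' y) \<le> norm (f' x0)"
    using continuous_attains_sup[OF assms(3) False] by blast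
  have lip: "lipschitz_on (norm (f' x0)) K f"
  proof (rule bounded_derivative_imp_lipschitz[where f'="\<lambda>x. blinfun_apply (f' x)"])
    show "(f has_derivative blinfun_apply (f' x)) (at x within K)" if "x \<in> K" for x
      using d that assms(2) by (auto intro: has_derivative_at_withinI)
    show "onorm (blinfun_apply (f' x)) \<le> norm (f' x0)" if "x \<in> K" for x
      using x0 that by (simp add: norm_blinfun.rep_eq[symmetric])
  qed (use assms in auto)
  have "continuous_on K f" by (rule lipschitz_on_continuous_on[OF lip])
  then have "compact (f ` K)" using assms(3) by (rule compact_continuous_image)
  then obtain M where M: "\<forall>y\<in>f ` K. norm y \<le> M" using compact_imp_bounded bounded_iff by metis
  have M0: "0 \<le> M" using M x0(1) by (meson image_eqI norm_ge_zero order_trans)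
  show ?thesis unfolding lipb_def using lip M M0 by auto
qed

lemma Lconst_bound:
  fixes h :: "'p::metric_space \<Rightarrow> 'o::finite \<Rightarrow> 's::finite \<Rightarrow> 'a::finite \<Rightarrow> 'o \<Rightarrow> bool \<Rightarrow> real"
  assumes lb: "\<And>q s a q' b. lipb (\<Theta> \<inter> cball \<theta> (dist \<theta> \<theta>')) (\<lambda>\<phi>. h \<phi> q s a q' b)"
    and th: "\<theta> \<in> \<Theta>" "\<theta>' \<in> \<Theta>"
  shows "\<bar>h \<theta>' q s a q' b - h \<theta> q s a q' b\<bar> \<le> Lconst h \<Theta> \<theta> (dist \<theta> \<theta>') * dist \<theta> \<theta>'"
    and "0 \<le> Lconst h \<Theta> \<theta> (dist \<theta> \<theta>')"
proof -
  let ?K = "\<Theta> \<inter> cball \<theta> (dist \<theta> \<theta>')"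
  define S where "S = {L. \<forall>q s a q' b. lipschitz_on L ?K (\<lambda>\<theta>'. h \<theta>' q s a q' b)}"
  have ex: "\<forall>arg :: 'o \<times> 's \<times> 'a \<times> 'o \<times> bool. \<exists>L. lipschitz_on L ?K (\<lambda>\<phi>. h \<phi> (fst arg) (fst (snd arg)) (fst (snd (snd arg))) (fst (snd (snd (snd arg)))) (snd (snd (snd (snd arg)))))"
    using lb unfolding lipb_def by blast
  then obtain Lf where Lf: "\<And>arg. lipschitz_on (Lf arg) ?K (\<lambda>\<phi>. h \<phi> (fst arg) (fst (snd arg)) (fst (snd (snd arg))) (fst (snd (snd (snd arg)))) (snd (snd (snd (snd arg)))))"
    by metis
  define Ls where "Ls = (\<Sum>arg\<in>UNIV. Lf arg)"
  have Lle: "Lf arg \<le> Ls" for arg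
    unfolding Ls_def by (rule member_le_sum) (use lipschitz_on_nonneg[OF Lf] in auto)
  have "Ls \<in> S"
    unfolding S_def
  proof (intro CollectI allI)
    fix q s a q' b
    show "lipschitz_on Ls ?K (\<lambda>\<theta>'. h \<theta>' q s a q' b)"
      using lipschitz_on_le[OF Lf[of "(q, s, a, q', b)"] Lle[of "(q, s, a, q', b)"]] by simp
  qed
  then have Sne: "S \<noteq> {}" by blast
  have S0: "0 \<le> L" if "L \<in> S" for L
  proof -
    have "lipschitz_on L ?K (\<lambda>\<theta>'. h \<theta>' undefined undefined undefined undefined undefined)" using that S_def by blast
    then show ?thesis by (rule lipschitz_on_nonneg)
  qed
  have LS: "Lconst h \<Theta> \<theta> (dist \<theta> \<theta>') = Inf S" by (simp add: Lconst_def S_def)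
  show "0 \<le> Lconst h \<Theta> \<theta> (dist \<theta> \<theta>')" unfolding LS by (rule cInf_greatest[OF Sne S0])
  show "\<bar>h \<theta>' q s a q' b - h \<theta> q s a q' b\<bar> \<le> Lconst h \<Theta> \<theta> (dist \<theta> \<theta>') * dist \<theta> \<theta>'"
  proof (cases "dist \<theta> \<theta>' = 0")
    case True then show ?thesis by simp
  next
    case False
    then have dp: "0 < dist \<theta> \<theta>'" by simp
    have mem: "\<theta> \<in> ?K" "\<theta>' \<in> ?K" using th by auto
    have "\<bar>h \<theta>' q s a q' b - h \<theta> q s a q' b\<bar> / dist \<theta> \<theta>' \<le> L" if "L \<in> S" for L
    proof -
      have "lipschitz_on L ?K (\<lambda>\<theta>'. h \<theta>' q s a q' b)" using that S_def by blast
      from lipschitz_onD[OF this mem(2) mem(1)] have "\<bar>h \<theta>' q s a q' b - h \<theta> q s a q' b\<bar> \<le> L * dist \<theta> \<theta>'"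
        by (simp add: dist_real_def dist_commute)
      then show ?thesis using dp by (simp add: divide_le_eq)
    qed
    then have "\<bar>h \<theta>' q s a q' b - h \<theta> q s a q' b\<bar> / dist \<theta> \<theta>' \<le> Inf S" by (intro cInf_greatest[OF Sne])
    then show ?thesis unfolding LS using dp by (simp add: divide_le_eq)
  qed
qed

lemma normalize_case_scale:
  assumes "C \<noteq> 0"
  shows "normalize (\<lambda>(q, b). C * g q b) = normalize (\<lambda>(q, b). g q b)"
proof -
  have "(\<lambda>(q, b). C * g q b) = (\<lambda>x. C * (case x of (q, b) \<Rightarrow> g q b))" by (auto split: prod.split)
  then show ?thesis using normalize_scale[OF assms] by simp
qed

lemma normalize_cong_pair:
  "(\<And>q b. f q b = g q b) \<Longrightarrow> normalize (\<lambda>(q, b). f q b) = normalize (\<lambda>(q, b). g q b)"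
  by (rule arg_cong[where f=normalize]) (auto split: prod.split)

lemma fwd_zero: "fwd \<kappa> (\<lambda>_. 0) lo n = (\<lambda>_. 0)"
  by (induction n) auto

lemma obs_prob_eq:
  fixes h :: "'p \<Rightarrow> 'o::finite \<Rightarrow> 's \<Rightarrow> 'a \<Rightarrow> 'o \<Rightarrow> bool \<Rightarrow> real"
  assumes "lo - 1 \<le> hi"
  shows "obs_prob h P \<theta> init lo hi ss as = Pc P lo hi ss as * (\<Sum>y\<in>UNIV. fwd (kap h \<theta> ss as) init lo (nat (hi - lo + 1)) y)"
proof -
  have hi: "hi = lo - 1 + int (nat (hi - lo + 1))" using assms by simp
  have "obs_prob h P \<theta> init lo hi ss as = (\<Sum>(os, bs)\<in>latents lo hi. pw (kap h \<theta> ss as) init lo hi os bs * (\<lambda>_. 1) (os hi)) * Pc P lo hi ss as"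
    unfolding obs_prob_def by (simp add: path_weight_pw sum_distrib_right case_prod_beta')
  also have "(\<Sum>(os, bs)\<in>latents lo hi. pw (kap h \<theta> ss as) init lo hi os bs * (\<lambda>_. 1) (os hi))
      = (\<Sum>y\<in>UNIV. fwd (kap h \<theta> ss as) init lo (nat (hi - lo + 1)) y * 1)"
    using path_sum[of "kap h \<theta> ss as" init lo "nat (hi - lo + 1)" "\<lambda>_. 1"] hi[symmetric] by simp
  finally show ?thesis by simp
qed

lemma gamma_mu_eq:
  fixes h :: "'p \<Rightarrow> 'o::finite \<Rightarrow> 's \<Rightarrow> 'a \<Rightarrow> 'o \<Rightarrow> bool \<Rightarrow> real"
  assumes "1 \<le> t" "t \<le> T" "Pc P 1 T ss as \<noteq> 0"
  shows "gamma_mu h P \<theta> \<mu> T ss as t = tgt1 (kap h \<theta> ss as) t (fwd (kap h \<theta> ss as) (\<mu> (ss 1)) 1 (nat (t - 1))) (bwd (kap h \<theta> ss as) (\<lambda>_. 1) T (nat (T - t)))"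
    and "gamma_mu_tilde h P \<theta> \<mu> T ss as t = tgt2 (kap h \<theta> ss as) t (fwd (kap h \<theta> ss as) (\<mu> (ss 1)) 1 (nat (t - 1))) (bwd (kap h \<theta> ss as) (\<lambda>_. 1) T (nat (T - t)))"
  unfolding gamma_mu_def gamma_mu_tilde_def tgt1_def tgt2_def
   by (subst normalize_cong_pair, rule marg_ob_eq[OF assms(1,2)], rule normalize_case_scale[OF assms(3)])
      (subst normalize_cong_pair, rule marg_prev_eq[OF assms(1,2)], rule normalize_case_scale[OF assms(3)])

lemma gamma_k_eq:
  fixes h :: "'p \<Rightarrow> 'o::finite \<Rightarrow> 's \<Rightarrow> 'a \<Rightarrow> 'o \<Rightarrow> bool \<Rightarrow> real"
      and \<theta> :: 'p and ss :: "int \<Rightarrow> 's" and as :: "int \<Rightarrow> 'a" and \<nu> :: "'o \<Rightarrow> 's \<Rightarrow> real"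
  assumes "1 \<le> t" "t \<le> T" "1 \<le> k" "Pc P (1 - k) (T + k) ss as \<noteq> 0"
  defines "\<kappa> \<equiv> kap h \<theta> ss as"
  defines "uB \<equiv> fwd \<kappa> (\<lambda>q. \<nu> q (ss (1 - k))) (1 - k) (nat k)"
  defines "wB \<equiv> bwd \<kappa> (\<lambda>_. 1) (T + k) (nat k)"
  shows "gamma_k h P \<theta> \<nu> k T ss as t = tgt1 \<kappa> t (fwd \<kappa> uB 1 (nat (t - 1))) (bwd \<kappa> wB T (nat (T - t)))"
    and "gamma_k_tilde h P \<theta> \<nu> k T ss as t = tgt2 \<kappa> t (fwd \<kappa> uB 1 (nat (t - 1))) (bwd \<kappa> wB T (nat (T - t)))"
proof -
  have a: "1 - k \<le> t" "t \<le> T + k" using assms by auto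
  have f: "fwd \<kappa> (\<lambda>q. \<nu> q (ss (1 - k))) (1 - k) (nat (t - (1 - k))) = fwd \<kappa> uB 1 (nat (t - 1))"
  proof -
    have "nat (t - (1 - k)) = nat k + nat (t - 1)" using assms by simp
    then show ?thesis using fwd_add[of \<kappa> "\<lambda>q. \<nu> q (ss (1 - k))" "1 - k" "nat k" "nat (t - 1)"] assms
      by (simp add: uB_def)
  qed
  have b: "bwd \<kappa> (\<lambda>_. 1) (T + k) (nat (T + k - t)) = bwd \<kappa> wB T (nat (T - t))"
  proof -
    have "nat (T + k - t) = nat k + nat (T - t)" using assms by simp
    then show ?thesis using bwd_add[of \<kappa> "\<lambda>_. 1" "T + k" "nat k" "nat (T - t)"] assms
      by (simp add: wB_def)
  qed
  show "gamma_k h P \<theta> \<nu> k T ss as t = tgt1 \<kappa> t (fwd \<kappa> uB 1 (nat (t - 1))) (bwd \<kappa> wB T (nat (T - t)))"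
    unfolding gamma_k_def tgt1_def
    by (subst normalize_cong_pair, rule marg_ob_eq[OF a], subst normalize_case_scale[OF assms(4)])
       (simp add: f[unfolded \<kappa>_def] b[unfolded \<kappa>_def] \<kappa>_def)
  show "gamma_k_tilde h P \<theta> \<nu> k T ss as t = tgt2 \<kappa> t (fwd \<kappa> uB 1 (nat (t - 1))) (bwd \<kappa> wB T (nat (T - t)))"
    unfolding gamma_k_tilde_def tgt2_def
    by (subst normalize_cong_pair, rule marg_prev_eq[OF a], subst normalize_case_scale[OF assms(4)])
       (simp add: f[unfolded \<kappa>_def] b[unfolded \<kappa>_def] \<kappa>_def)
qed

theorem lemma12:
  fixes pi_hi :: "'h::euclidean_space \<Rightarrow> 's::finite \<Rightarrow> 'o::finite \<Rightarrow> real"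
    and pi_lo :: "'l::euclidean_space \<Rightarrow> 's \<Rightarrow> 'o \<Rightarrow> 'a::finite \<Rightarrow> real"
    and pi_b :: "'b::euclidean_space \<Rightarrow> 's \<Rightarrow> 'o \<Rightarrow> bool \<Rightarrow> real"
    and P :: "'s \<Rightarrow> 'a \<Rightarrow> 's \<Rightarrow> real"
    and \<zeta> \<epsilon>b :: real
    and \<Theta>h :: "'h set" and \<Theta>l :: "'l set" and \<Theta>b :: "'b set"
    and \<theta>star \<theta> \<theta>' :: "'h \<times> 'l \<times> 'b"
    and \<nu> :: "'o \<Rightarrow> 's \<Rightarrow> real"
    and \<mu> :: "'s \<Rightarrow> 'o \<Rightarrow> real"
    and k T :: int
    and ss :: "int \<Rightarrow> 's" and as :: "int \<Rightarrow> 'a"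
  defines "\<Theta> \<equiv> \<Theta>h \<times> \<Theta>l \<times> \<Theta>b"
    and "h \<equiv> hfun pi_hi pi_lo pi_b \<zeta>"
  assumes Theta: "convex \<Theta>h" "compact \<Theta>h" "convex \<Theta>l" "compact \<Theta>l" "convex \<Theta>b" "compact \<Theta>b"
    and zeta: "0 < \<zeta>" "\<zeta> < 1"
    and P_dist: "\<forall>s a s'. 0 \<le> P s a s'" "\<forall>s a. (\<Sum>s'\<in>UNIV. P s a s') = 1"
    and policies: "\<exists>U. open U \<and> \<Theta> \<subseteq> U \<and>
        (\<forall>\<phi>\<in>U. \<forall>s.
            (\<forall>q. 0 < pi_hi (fst \<phi>) s q) \<and> (\<Sum>q\<in>UNIV. pi_hi (fst \<phi>) s q) = 1 \<and>
            (\<forall>q. (\<forall>a. 0 < pi_lo (fst (snd \<phi>)) s q a) \<and> (\<Sum>a\<in>UNIV. pi_lo (fst (snd \<phi>)) s q a) = 1) \<and>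
            (\<forall>q. (\<forall>b. 0 < pi_b (snd (snd \<phi>)) s q b) \<and> (\<Sum>b\<in>UNIV. pi_b (snd (snd \<phi>)) s q b) = 1)) \<and>
        (\<forall>s q. C1_on U (\<lambda>\<phi>. pi_hi (fst \<phi>) s q)) \<and>
        (\<forall>s q a. C1_on U (\<lambda>\<phi>. pi_lo (fst (snd \<phi>)) s q a)) \<and>
        (\<forall>s q b. C1_on U (\<lambda>\<phi>. pi_b (snd (snd \<phi>)) s q b))"
    and true_param: "\<theta>star \<in> \<Theta>"
    and nu_star: "extreme_point_in \<nu> (stationary_dists h P \<theta>star)"
    and eps_b: "0 < \<epsilon>b"
      "\<exists>pibar :: 'h \<times> 'l \<times> 'b \<Rightarrow> 's \<Rightarrow> 'o \<Rightarrow> bool \<Rightarrow> real.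
         (\<forall>\<phi>\<in>\<Theta>. \<forall>s. (\<forall>q b. 0 \<le> pibar \<phi> s q b) \<and> (\<Sum>(q, b)\<in>UNIV. pibar \<phi> s q b) = 1) \<and>
         (\<forall>\<phi>\<in>\<Theta>. \<forall>o_prev s q b.
            0 < \<epsilon>b * \<zeta> * pibar \<phi> s q b \<and>
            \<epsilon>b * \<zeta> * pibar \<phi> s q b
              \<le> pi_b (snd (snd \<phi>)) s o_prev b * pibar_hi pi_hi \<zeta> (fst \<phi>) s o_prev b q \<and>
            pi_b (snd (snd \<phi>)) s o_prev b * pibar_hi pi_hi \<zeta> (fst \<phi>) s o_prev b q
              \<le> inverse \<epsilon>b * real (card (UNIV :: 'o set)) * pibar \<phi> s q b)"
    and params: "\<theta> \<in> \<Theta>" "\<theta>' \<in> \<Theta>"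
    and k_pos: "1 \<le> k"
    and mu: "\<forall>s q. 0 \<le> \<mu> s q" "\<forall>s. (\<Sum>q\<in>UNIV. \<mu> s q) = 1"
    and T2: "2 \<le> T"
    and omega: "\<forall>t. 0 < P (ss t) (as t) (ss (t + 1))"
    and obs_pos: "0 < obs_prob h P \<theta>' (\<lambda>q. \<nu> q (ss (1 - k))) (1 - k) (T + k) ss as"
  shows "(\<forall>t\<in>{1..T}.
            tv_dist (gamma_mu h P \<theta> \<mu> T ss as t) (gamma_k h P \<theta>' \<nu> k T ss as t)
            \<le> (1 - \<epsilon>b\<^sup>2 * \<zeta> / real (card (UNIV :: 'o set))) ^ nat (t - 1)
             + (1 - \<epsilon>b\<^sup>2 * \<zeta> / real (card (UNIV :: 'o set))) ^ nat (T - t)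
             + 2 * real (card (UNIV :: 'o set)) * zconst h \<theta> \<theta>' * Lconst h \<Theta> \<theta> (norm (\<theta>' - \<theta>))
                 / (\<epsilon>b\<^sup>2 * \<zeta>) * norm (\<theta>' - \<theta>))
       \<and> (\<forall>t\<in>{2..T}.
            tv_dist (gamma_mu_tilde h P \<theta> \<mu> T ss as t) (gamma_k_tilde h P \<theta>' \<nu> k T ss as t)
            \<le> 2 * (1 - \<epsilon>b\<^sup>2 * \<zeta> / real (card (UNIV :: 'o set))) ^ nat (t - 2)
             + (1 - \<epsilon>b\<^sup>2 * \<zeta> / real (card (UNIV :: 'o set))) ^ nat (T - t)
             + 4 * real (card (UNIV :: 'o set)) * zconst h \<theta> \<theta>' * Lconst h \<Theta> \<theta> (norm (\<theta>' - \<theta>))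
                 / (\<epsilon>b\<^sup>2 * \<zeta>) * norm (\<theta>' - \<theta>))"
  proof -
  let ?n = "real (card (UNIV :: 'o set))"
  define c where "c = \<epsilon>b\<^sup>2 * \<zeta> / ?n"
  have n0: "0 < ?n" by simp
  have c0: "0 < c" using eps_b(1) zeta n0 by (simp add: c_def)
  obtain U where U: "open U" "\<Theta> \<subseteq> U"
    and pos: "\<forall>\<phi>\<in>U. \<forall>s.
            (\<forall>q. 0 < pi_hi (fst \<phi>) s q) \<and> (\<Sum>q\<in>UNIV. pi_hi (fst \<phi>) s q) = 1 \<and>
            (\<forall>q. (\<forall>a. 0 < pi_lo (fst (snd \<phi>)) s q a) \<and> (\<Sum>a\<in>UNIV. pi_lo (fst (snd \<phi>)) s q a) = 1) \<and>
            (\<forall>q. (\<forall>b. 0 < pi_b (snd (snd \<phi>)) s q b) \<and> (\<Sum>b\<in>UNIV. pi_b (snd (snd \<phi>)) s q b) = 1)"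
    and C1h: "\<forall>s q. C1_on U (\<lambda>\<phi>. pi_hi (fst \<phi>) s q)"
    and C1l: "\<forall>s q a. C1_on U (\<lambda>\<phi>. pi_lo (fst (snd \<phi>)) s q a)"
    and C1b: "\<forall>s q b. C1_on U (\<lambda>\<phi>. pi_b (snd (snd \<phi>)) s q b)"
    using policies by blast
  obtain pibar :: "'h \<times> 'l \<times> 'b \<Rightarrow> 's \<Rightarrow> 'o \<Rightarrow> bool \<Rightarrow> real"
    where pb: "\<forall>\<phi>\<in>\<Theta>. \<forall>o_prev s q b.
            0 < \<epsilon>b * \<zeta> * pibar \<phi> s q b \<and>
            \<epsilon>b * \<zeta> * pibar \<phi> s q b
              \<le> pi_b (snd (snd \<phi>)) s o_prev b * pibar_hi pi_hi \<zeta> (fst \<phi>) s o_prev b q \<and>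
            pi_b (snd (snd \<phi>)) s o_prev b * pibar_hi pi_hi \<zeta> (fst \<phi>) s o_prev b q
              \<le> inverse \<epsilon>b * real (card (UNIV :: 'o set)) * pibar \<phi> s q b"
    using eps_b(2) by blast
  have hsplit: "h \<phi> x s a y e = (pi_b (snd (snd \<phi>)) s x e * pibar_hi pi_hi \<zeta> (fst \<phi>) s x e y) * pi_lo (fst (snd \<phi>)) s y a" for \<phi> x s a y e
    by (simp add: h_def hfun_def)
  have lo_pos: "\<phi> \<in> \<Theta> \<Longrightarrow> 0 < pi_lo (fst (snd \<phi>)) s y a" for \<phi> s y a using pos U(2) by blast
  have hpos: "0 < h \<phi> x s a y e" if "\<phi> \<in> \<Theta>" for \<phi> x s a y e
  proof -
    have "0 < pi_b (snd (snd \<phi>)) s x e * pibar_hi pi_hi \<zeta> (fst \<phi>) s x e y"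
      using pb that by (meson order_less_le_trans)
    then show ?thesis unfolding hsplit using lo_pos[OF that] by (simp add: mult_pos_pos)
  qed
  have hratio: "c * h \<phi> x' s a y e \<le> h \<phi> x s a y e" if "\<phi> \<in> \<Theta>" for \<phi> x x' s a y e
  proof -
    let ?X = "\<lambda>x. pi_b (snd (snd \<phi>)) s x e * pibar_hi pi_hi \<zeta> (fst \<phi>) s x e y"
    let ?p = "pibar \<phi> s y e"
    have 1: "\<epsilon>b * \<zeta> * ?p \<le> ?X x" and 2: "?X x' \<le> inverse \<epsilon>b * ?n * ?p" using pb that by blast+
    have "c * ?X x' \<le> c * (inverse \<epsilon>b * ?n * ?p)" using 2 c0 by (intro mult_left_mono) auto
    also have "\<dots> = \<epsilon>b * \<zeta> * ?p" using eps_b(1) n0 by (simp add: c_def power2_eq_square field_simps)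
    also have "\<dots> \<le> ?X x" by (rule 1)
    finally have "c * ?X x' \<le> ?X x" .
    then have "c * ?X x' * pi_lo (fst (snd \<phi>)) s y a \<le> ?X x * pi_lo (fst (snd \<phi>)) s y a"
      using less_imp_le[OF lo_pos[OF that, of s y a]] by (intro mult_right_mono) auto
    then show ?thesis unfolding hsplit by (simp add: mult.assoc)
  qed
  have good: "good (kap h \<phi> ss as) c" if "\<phi> \<in> \<Theta>" for \<phi>
    unfolding good_def kap_def using c0 hpos[OF that] hratio[OF that] by auto
  define K where "K = \<Theta> \<inter> cball \<theta> (dist \<theta> \<theta>')"
  have Kcomp: "compact K" unfolding K_def \<Theta>_def
    by (intro compact_Int_closed compact_Times closed_cball) (use Theta in auto)
  have Kconv: "convex K" unfolding K_def \<Theta>_def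
    by (intro convex_Int convex_Times convex_cball) (use Theta in auto)
  have KU: "K \<subseteq> U" using U(2) K_def by auto
  have lb: "lipb K (\<lambda>\<phi>. h \<phi> q s a q' b)" for q s a q' b
  proof -
    have l1: "lipb K (\<lambda>\<phi>. pi_b (snd (snd \<phi>)) s q b)" using C1b KU Kcomp Kconv by (intro lipb_C1) auto
    have l3: "lipb K (\<lambda>\<phi>. pi_lo (fst (snd \<phi>)) s q' a)" using C1l KU Kcomp Kconv by (intro lipb_C1) auto
    have l2: "lipb K (\<lambda>\<phi>. pibar_hi pi_hi \<zeta> (fst \<phi>) s q b q')"
    proof (cases b)
      case True
      have "lipb K (\<lambda>\<phi>. pi_hi (fst \<phi>) s q')" using C1h KU Kcomp Kconv by (intro lipb_C1) auto
      then show ?thesis unfolding pibar_hi_def using True by simp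
    next
      case False
      then show ?thesis unfolding pibar_hi_def by (simp add: lipb_const)
    qed
    show ?thesis unfolding hsplit by (intro lipb_mult l1 l2 l3)
  qed
  have dd: "dist \<theta> \<theta>' = norm (\<theta>' - \<theta>)" by (simp add: dist_norm norm_minus_commute)
  define L where "L = Lconst h \<Theta> \<theta> (norm (\<theta>' - \<theta>))"
  define \<Delta> where "\<Delta> = norm (\<theta>' - \<theta>)"
  define z where "z = zconst h \<theta> \<theta>'"
  define r where "r = z * L * \<Delta>"
  have Lip: "\<bar>h \<theta>' q s a q' b - h \<theta> q s a q' b\<bar> \<le> L * \<Delta>" for q s a q' b
    using Lconst_bound(1)[of \<Theta> \<theta> \<theta>' h, OF lb[unfolded K_def] params] unfolding L_def \<Delta>_def dd .
  have L0: "0 \<le> L"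
    using Lconst_bound(2)[of \<Theta> \<theta> \<theta>' h, OF lb[unfolded K_def] params] unfolding L_def dd .
  have zh: "1 \<le> z * h \<theta> q s a q' b" for q s a q' b
  proof -
    define A where "A \<phi> = (\<lambda>(q, q', b). h \<phi> q s a q' b) ` (UNIV :: ('o \<times> 'o \<times> bool) set)" for \<phi>
    have fin: "finite (A \<phi>)" "A \<phi> \<noteq> {}" for \<phi> by (auto simp: A_def)
    have Apos: "0 < v" if "v \<in> A \<phi>" "\<phi> \<in> \<Theta>" for v \<phi> using that(1) hpos[OF that(2)] by (auto simp: A_def)
    have m1: "0 < Min (A \<theta>)" using Min_in[OF fin] Apos params(1) by blast
    have m2: "0 < Min (A \<theta>')" using Min_in[OF fin] Apos params(2) by blast
    have hm: "Min (A \<theta>) \<le> h \<theta> q s a q' b" by (rule Min_le) (auto simp: A_def fin intro!: image_eqI[where x="(q, q', b)"])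
    have mM: "Min (A \<theta>') \<le> max (Max (A \<theta>)) (Max (A \<theta>'))"
      using Min_le[OF fin(1) Max_in[OF fin]] by (simp add: le_max_iff_disj)
    have "1 / Min (A \<theta>) = Min (A \<theta>') / (Min (A \<theta>) * Min (A \<theta>'))" using m1 m2 by simp
    also have "\<dots> \<le> max (Max (A \<theta>)) (Max (A \<theta>')) / (Min (A \<theta>) * Min (A \<theta>'))"
      using mM m1 m2 by (intro divide_right_mono) auto
    also have "\<dots> \<le> z"
      unfolding z_def zconst_def
      by (rule Max_ge) (auto simp: A_def intro!: image_eqI[where x="(s, a)"])
    finally have "1 / Min (A \<theta>) \<le> z" .
    moreover have "1 / h \<theta> q s a q' b \<le> 1 / Min (A \<theta>)" using hm m1 by (intro divide_left_mono) auto
    ultimately have "1 / h \<theta> q s a q' b \<le> z" by linarith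
    then show ?thesis using hpos[OF params(1)] by (simp add: divide_le_eq mult.commute)
  qed
  have z0: "0 \<le> z"
  proof -
    have a: "1 \<le> z * h \<theta> undefined undefined undefined undefined undefined" by (rule zh)
    have b: "0 < h \<theta> undefined undefined undefined undefined undefined" by (rule hpos[OF params(1)])
    from a have "0 < z * h \<theta> undefined undefined undefined undefined undefined" by linarith
    then show ?thesis using b by (simp add: zero_less_mult_iff)
  qed
  have r0: "0 \<le> r" using z0 L0 by (simp add: r_def \<Delta>_def)
  have cl: "\<bar>kap h \<theta> ss as s x y e - kap h \<theta>' ss as s x y e\<bar> \<le> r * kap h \<theta> ss as s x y e" for s x y e
  proof -
    have "\<bar>kap h \<theta> ss as s x y e - kap h \<theta>' ss as s x y e\<bar> \<le> L * \<Delta>"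
      using Lip by (simp add: kap_def abs_minus_commute)
    also have "\<dots> \<le> L * \<Delta> * (z * kap h \<theta> ss as s x y e)"
    proof -
      have "0 \<le> L * \<Delta>" using L0 by (simp add: \<Delta>_def)
      moreover have "1 \<le> z * kap h \<theta> ss as s x y e" using zh by (simp add: kap_def)
      ultimately show ?thesis using mult_left_mono[of 1 "z * kap h \<theta> ss as s x y e" "L * \<Delta>"] by simp
    qed
    also have "\<dots> = r * kap h \<theta> ss as s x y e" by (simp add: r_def)
    finally show ?thesis .
  qed
  have Pcpos: "0 < Pc P lo hi ss as" for lo hi unfolding Pc_def using omega by (intro prod_pos) auto
  have Pcnz: "Pc P lo hi ss as \<noteq> 0" for lo hi using Pcpos[of lo hi] by simp
  define \<kappa>A where "\<kappa>A = kap h \<theta> ss as"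
  define \<kappa>B where "\<kappa>B = kap h \<theta>' ss as"
  define uA where "uA = \<mu> (ss 1)"
  define \<nu>' where "\<nu>' = (\<lambda>q. \<nu> q (ss (1 - k)))"
  define uB where "uB = fwd \<kappa>B \<nu>' (1 - k) (nat k)"
  define wB where "wB = bwd \<kappa>B (\<lambda>_. 1) (T + k) (nat k)"
  have gA: "good \<kappa>A c" unfolding \<kappa>A_def by (rule good[OF params(1)])
  have gB: "good \<kappa>B c" unfolding \<kappa>B_def by (rule good[OF params(2)])
  have uA0: "0 \<le> uA x" for x using mu(1) by (simp add: uA_def)
  obtain zA where zA: "uA zA \<noteq> 0"
  proof -
    have "\<exists>x. uA x \<noteq> 0"
    proof (rule ccontr)
      assume "\<not> (\<exists>x. uA x \<noteq> 0)"
      then have "(\<Sum>q\<in>UNIV. \<mu> (ss 1) q) = 0" by (simp add: uA_def)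
      then show False using mu(2) by simp
    qed
    then show ?thesis using that by blast
  qed
  have \<nu>0: "0 \<le> \<nu>' x" for x using nu_star by (simp add: \<nu>'_def extreme_point_in_def stationary_dists_def)
  have uB0: "0 \<le> uB x" for x unfolding uB_def by (rule fwd_nonneg[OF gB]) (rule \<nu>0)
  obtain zB where zB: "uB zB \<noteq> 0"
  proof -
    have "\<exists>x. uB x \<noteq> 0"
    proof (rule ccontr)
      assume "\<not> (\<exists>x. uB x \<noteq> 0)"
      then have u0: "uB = (\<lambda>_. 0)" by auto
      have e: "nat (T + k - (1 - k) + 1) = nat k + nat (T + k)" using k_pos T2 by simp
      have "obs_prob h P \<theta>' \<nu>' (1 - k) (T + k) ss as = Pc P (1 - k) (T + k) ss as * (\<Sum>y\<in>UNIV. fwd \<kappa>B \<nu>' (1 - k) (nat (T + k - (1 - k) + 1)) y)"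
        unfolding \<kappa>B_def by (rule obs_prob_eq) (use k_pos T2 in simp)
      also have "fwd \<kappa>B \<nu>' (1 - k) (nat (T + k - (1 - k) + 1)) = fwd \<kappa>B uB (1 - k + int (nat k)) (nat (T + k))"
        unfolding e uB_def by (rule fwd_add)
      also have "\<dots> = (\<lambda>_. 0)" unfolding u0 by (rule fwd_zero)
      finally have "obs_prob h P \<theta>' \<nu>' (1 - k) (T + k) ss as = 0" by simp
      then show False using obs_pos by (simp add: \<nu>'_def)
    qed
    then show ?thesis using that by blast
  qed
  have wAp: "0 < (\<lambda>_::'o. 1::real) x" for x by simp
  have wBp: "0 < wB x" for x unfolding wB_def by (rule bwd_pos[OF gB]) simp
  have cl': "\<bar>\<kappa>A s x y e - \<kappa>B s x y e\<bar> \<le> r * \<kappa>A s x y e" for s x y e using cl by (simp add: \<kappa>A_def \<kappa>B_def)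
  have conv: "int (nat t) = t" "nat t - 1 = nat (t - 1)" "int (nat T) = T" "nat T - nat t = nat (T - t)"
    if "1 \<le> t" "t \<le> T" for t using that by auto
  have final_c: "2 * r / c = 2 * real (card (UNIV :: 'o set)) * zconst h \<theta> \<theta>' * Lconst h \<Theta> \<theta> (norm (\<theta>' - \<theta>)) / (\<epsilon>b\<^sup>2 * \<zeta>) * norm (\<theta>' - \<theta>)"
    using eps_b(1) zeta n0 by (simp add: r_def c_def z_def L_def \<Delta>_def field_simps)
  have final_c4: "4 * r / c = 4 * real (card (UNIV :: 'o set)) * zconst h \<theta> \<theta>' * Lconst h \<Theta> \<theta> (norm (\<theta>' - \<theta>)) / (\<epsilon>b\<^sup>2 * \<zeta>) * norm (\<theta>' - \<theta>)"
    using eps_b(1) zeta n0 by (simp add: r_def c_def z_def L_def \<Delta>_def field_simps)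
  have cdef: "1 - \<epsilon>b\<^sup>2 * \<zeta> / real (card (UNIV :: 'o set)) = 1 - c" by (simp add: c_def)
  have part1: "tv_dist (gamma_mu h P \<theta> \<mu> T ss as t) (gamma_k h P \<theta>' \<nu> k T ss as t)
            \<le> (1 - c) ^ nat (t - 1) + (1 - c) ^ nat (T - t) + 2 * r / c" if t: "t \<in> {1..T}" for t
  proof -
    have t1: "1 \<le> t" "t \<le> T" using t by auto
    have M: "tv_dist (tgt1 \<kappa>A (int (nat t)) (fwd \<kappa>A uA 1 (nat t - 1)) (bwd \<kappa>A (\<lambda>_. 1) (int (nat T)) (nat T - nat t)))
                 (tgt1 \<kappa>B (int (nat t)) (fwd \<kappa>B uB 1 (nat t - 1)) (bwd \<kappa>B wB (int (nat T)) (nat T - nat t)))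
         \<le> (1 - c) ^ (nat t - 1) + (1 - c) ^ (nat T - nat t) + 2 * r / c"
      by (rule MAIN(1)[where \<kappa>A=\<kappa>A and \<kappa>B=\<kappa>B and uA=uA and uB=uB and wA="\<lambda>_. 1" and wB=wB and r=r and c=c and zA=zA and zB=zB, OF gA gB c0 cl' uA0 zA uB0 zB wAp wBp]) (use t1 in auto)
    have g1: "gamma_mu h P \<theta> \<mu> T ss as t = tgt1 \<kappa>A t (fwd \<kappa>A uA 1 (nat (t - 1))) (bwd \<kappa>A (\<lambda>_. 1) T (nat (T - t)))"
      unfolding \<kappa>A_def uA_def by (rule gamma_mu_eq(1)[OF t1 Pcnz])
    have g2: "gamma_k h P \<theta>' \<nu> k T ss as t = tgt1 \<kappa>B t (fwd \<kappa>B uB 1 (nat (t - 1))) (bwd \<kappa>B wB T (nat (T - t)))"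
      unfolding \<kappa>B_def uB_def wB_def \<nu>'_def by (rule gamma_k_eq(1)[OF t1 k_pos Pcnz])
    show ?thesis using M unfolding g1 g2 conv[OF t1] .
  qed
  have part2: "tv_dist (gamma_mu_tilde h P \<theta> \<mu> T ss as t) (gamma_k_tilde h P \<theta>' \<nu> k T ss as t)
            \<le> (1 - c) ^ nat (t - 1) + (1 - c) ^ nat (T - t) + 3 * r / c" if t: "t \<in> {2..T}" for t
  proof -
    have t1: "1 \<le> t" "t \<le> T" using t by auto
    have M: "tv_dist (tgt2 \<kappa>A (int (nat t)) (fwd \<kappa>A uA 1 (nat t - 1)) (bwd \<kappa>A (\<lambda>_. 1) (int (nat T)) (nat T - nat t)))
                 (tgt2 \<kappa>B (int (nat t)) (fwd \<kappa>B uB 1 (nat t - 1)) (bwd \<kappa>B wB (int (nat T)) (nat T - nat t)))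
         \<le> (1 - c) ^ (nat t - 1) + (1 - c) ^ (nat T - nat t) + 3 * r / c"
      by (rule MAIN(2)[where \<kappa>A=\<kappa>A and \<kappa>B=\<kappa>B and uA=uA and uB=uB and wA="\<lambda>_. 1" and wB=wB and r=r and c=c and zA=zA and zB=zB, OF gA gB c0 cl' uA0 zA uB0 zB wAp wBp]) (use t1 in auto)
    have g1: "gamma_mu_tilde h P \<theta> \<mu> T ss as t = tgt2 \<kappa>A t (fwd \<kappa>A uA 1 (nat (t - 1))) (bwd \<kappa>A (\<lambda>_. 1) T (nat (T - t)))"
      unfolding \<kappa>A_def uA_def by (rule gamma_mu_eq(2)[OF t1 Pcnz])
    have g2: "gamma_k_tilde h P \<theta>' \<nu> k T ss as t = tgt2 \<kappa>B t (fwd \<kappa>B uB 1 (nat (t - 1))) (bwd \<kappa>B wB T (nat (T - t)))"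
      unfolding \<kappa>B_def uB_def wB_def \<nu>'_def by (rule gamma_k_eq(2)[OF t1 k_pos Pcnz])
    show ?thesis using M unfolding g1 g2 conv[OF t1] .
  qed
  have c1: "c \<le> 1" using good_c1[OF gA] .
  show ?thesis
  proof (intro conjI ballI)
    fix t assume t: "t \<in> {1..T}"
    show "tv_dist (gamma_mu h P \<theta> \<mu> T ss as t) (gamma_k h P \<theta>' \<nu> k T ss as t)
            \<le> (1 - \<epsilon>b\<^sup>2 * \<zeta> / real (card (UNIV :: 'o set))) ^ nat (t - 1)
             + (1 - \<epsilon>b\<^sup>2 * \<zeta> / real (card (UNIV :: 'o set))) ^ nat (T - t)
             + 2 * real (card (UNIV :: 'o set)) * zconst h \<theta> \<theta>' * Lconst h \<Theta> \<theta> (norm (\<theta>' - \<theta>))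
                 / (\<epsilon>b\<^sup>2 * \<zeta>) * norm (\<theta>' - \<theta>)"
      unfolding cdef final_c[symmetric] by (rule part1[OF t])
  next
    fix t assume t: "t \<in> {2..T}"
    have e: "nat (t - 1) = Suc (nat (t - 2))" using t by auto
    have p: "(1 - c) ^ nat (t - 1) \<le> 2 * (1 - c) ^ nat (t - 2)"
    proof -
      have "(1 - c) ^ nat (t - 1) = (1 - c) * (1 - c) ^ nat (t - 2)" unfolding e by simp
      also have "\<dots> \<le> 1 * (1 - c) ^ nat (t - 2)" using c0 c1 by (intro mult_right_mono) auto
      also have "\<dots> \<le> 2 * (1 - c) ^ nat (t - 2)" using c1 by simp
      finally show ?thesis .
    qed
    have q: "3 * r / c \<le> 4 * r / c" using r0 c0 by (simp add: divide_right_mono)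
    show "tv_dist (gamma_mu_tilde h P \<theta> \<mu> T ss as t) (gamma_k_tilde h P \<theta>' \<nu> k T ss as t)
            \<le> 2 * (1 - \<epsilon>b\<^sup>2 * \<zeta> / real (card (UNIV :: 'o set))) ^ nat (t - 2)
             + (1 - \<epsilon>b\<^sup>2 * \<zeta> / real (card (UNIV :: 'o set))) ^ nat (T - t)
             + 4 * real (card (UNIV :: 'o set)) * zconst h \<theta> \<theta>' * Lconst h \<Theta> \<theta> (norm (\<theta>' - \<theta>))
                 / (\<epsilon>b\<^sup>2 * \<zeta>) * norm (\<theta>' - \<theta>)"
      unfolding cdef final_c4[symmetric] using part2[OF t] p q by linarith
  qed
qed


end
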